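(* For any prime $p>3$, $$\sum_{k=1}^{p-1} {(1/2)_k^2\over (1)_k^2}\cdot{1\over k}\equiv -2H_{(p-1)/2}(1)\pmod{p^3},$$ $$\sum_{k=1}^{p-1} {(1/2)_k^2\over (1)_k^2}\cdot{1\over k^2}\equiv -2H_{(p-1)/2}(1)^2\pmod{p^2}.$$
   Context: $(y)_n=y(y+1)\cdots(y+n-1)$ denotes the Pochhammer symbol, and $H_n(1)=\sum_{k=1}^n \frac1k$. Congruences between rational numbers modulo $p^j$ mean that the difference is a rational number whose numerator is divisible by $p^j$ and whose denominator is prime to $p$. *)

theory Defs
  imports Complex_Main "HOL-Computational_Algebra.Primes"
begin

definition rat_cong :: "rat \<Rightarrow> rat \<Rightarrow> nat \<Rightarrow> bool" where
  "rat_cong a b m \<longleftrightarrow>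
     (case quotient_of (a - b) of (n, d) \<Rightarrow> int m dvd n \<and> coprime d (int m))"

definition harm :: "nat \<Rightarrow> rat" where
  "harm n = (\<Sum>k=1..n. 1 / of_nat k)"

end

theory Submission
  imports Defs "HOL-Computational_Algebra.Polynomial" "HOL-Number_Theory.Residues"
begin

hide_const (open) UnivPoly.coeff module.smult


definition pint :: "nat \<Rightarrow> rat \<Rightarrow> bool" where
  "pint p q \<longleftrightarrow> (\<exists>a b. coprime b (int p) \<and> q = of_int a / of_int b)"

definition pdv :: "nat \<Rightarrow> nat \<Rightarrow> rat \<Rightarrow> bool" where
  "pdv p j x \<longleftrightarrow> pint p (x / of_nat p ^ j)"

lemma pint_int [simp]: "pint p (of_int a)"
  unfolding pint_def by (rule exI[of _ a], rule exI[of _ 1]) auto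

lemma pint_nat [simp]: "pint p (of_nat a)"
  using pint_int[of p "int a"] by simp

lemma pint_0 [simp]: "pint p 0" using pint_int[of p 0] by simp
lemma pint_1 [simp]: "pint p 1" using pint_int[of p 1] by simp
lemma pint_numeral [simp]: "pint p (numeral k)" using pint_int[of p "numeral k"] by simp

lemma pint_uminus [simp]: "pint p (- x) \<longleftrightarrow> pint p x"
proof -
  have *: "pint p (- x)" if "pint p x" for x
  proof -
    from that obtain a b where "coprime b (int p)" "x = of_int a / of_int b" unfolding pint_def by auto
    then show ?thesis unfolding pint_def by (intro exI[of _ "-a"] exI[of _ b]) auto
  qed
  show ?thesis using *[of x] *[of "-x"] by auto
qed

lemma pint_div_int:
  assumes "pint p x" "coprime b (int p)"
  shows "pint p (x / of_int b)"
proof -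
  from assms obtain a c where ac: "coprime c (int p)" "x = of_int a / of_int c" unfolding pint_def by auto
  then show ?thesis unfolding pint_def using assms(2)
    by (intro exI[of _ a] exI[of _ "c*b"]) auto
qed

lemma pint_add [intro]:
  assumes "pint p x" "pint p y" shows "pint p (x + y)"
proof -
  from assms obtain a b c d where ab: "coprime b (int p)" "x = of_int a / of_int b"
    and cd: "coprime d (int p)" "y = of_int c / of_int d" unfolding pint_def by auto
  show ?thesis
  proof (cases "b = 0 \<or> d = 0")
    case True
    then show ?thesis using assms ab cd by auto
  next
    case False
    then have "x + y = of_int (a*d + c*b) / of_int (b*d)" using ab cd by (simp add: field_simps)
    then show ?thesis unfolding pint_def using ab cd by (intro exI[of _ "a*d+c*b"] exI[of _ "b*d"]) auto
  qed
qed

lemma pint_mult [intro]: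
  assumes "pint p x" "pint p y" shows "pint p (x * y)"
proof -
  from assms obtain a b c d where ab: "coprime b (int p)" "x = of_int a / of_int b"
    and cd: "coprime d (int p)" "y = of_int c / of_int d" unfolding pint_def by auto
  then have "x * y = of_int (a*c) / of_int (b*d)" by simp
  then show ?thesis unfolding pint_def using ab cd by (intro exI[of _ "a*c"] exI[of _ "b*d"]) auto
qed

lemma pint_diff [intro]: "pint p x \<Longrightarrow> pint p y \<Longrightarrow> pint p (x - y)"
  using pint_add[of p x "-y"] by simp

lemma pint_sum [intro]: "(\<And>i. i \<in> A \<Longrightarrow> pint p (f i)) \<Longrightarrow> pint p (\<Sum>i\<in>A. f i)"
  by (induction A rule: infinite_finite_induct) auto

lemma pint_prod [intro]: "(\<And>i. i \<in> A \<Longrightarrow> pint p (f i)) \<Longrightarrow> pint p (\<Prod>i\<in>A. f i)"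
  by (induction A rule: infinite_finite_induct) auto

lemma pint_power [intro]: "pint p x \<Longrightarrow> pint p (x ^ k)"
  by (induction k) auto

lemma pint_div_nat:
  assumes "prime p" "pint p x" "\<not> p dvd k"
  shows "pint p (x / of_nat k)"
proof -
  have "coprime (int k) (int p)" using assms
    by (metis coprime_commute coprime_int_iff prime_imp_coprime_nat)
  then show ?thesis using pint_div_int[OF assms(2), of "int k"] by simp
qed

lemma pint_inv_nat:
  assumes "prime p" "\<not> p dvd k"
  shows "pint p (1 / of_nat k)"
  using pint_div_nat[OF assms(1) _ assms(2), of 1] by simp

lemma pdv_0 [simp]: "pdv p 0 x \<longleftrightarrow> pint p x" unfolding pdv_def by simp

lemma pdv_zero [simp]: "pdv p j 0" unfolding pdv_def by simp

lemma pdv_add [intro]: "pdv p j x \<Longrightarrow> pdv p j y \<Longrightarrow> pdv p j (x + y)"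
  unfolding pdv_def using pint_add[of p "x / of_nat p ^ j" "y / of_nat p ^ j"] by (simp add: add_divide_distrib)

lemma pdv_uminus [simp]: "pdv p j (- x) \<longleftrightarrow> pdv p j x"
  unfolding pdv_def by simp

lemma pdv_diff [intro]: "pdv p j x \<Longrightarrow> pdv p j y \<Longrightarrow> pdv p j (x - y)"
  using pdv_add[of p j x "-y"] by simp

lemma pdv_sum [intro]: "(\<And>i. i \<in> A \<Longrightarrow> pdv p j (f i)) \<Longrightarrow> pdv p j (\<Sum>i\<in>A. f i)"
  by (induction A rule: infinite_finite_induct) auto

lemma pdv_mult_pint [intro]: "pdv p j x \<Longrightarrow> pint p y \<Longrightarrow> pdv p j (x * y)"
  unfolding pdv_def using pint_mult[of p "x / of_nat p ^ j" y] by (simp add: field_simps)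

lemma pdv_mult_pint' [intro]: "pint p y \<Longrightarrow> pdv p j x \<Longrightarrow> pdv p j (y * x)"
  using pdv_mult_pint[of p j x y] by (simp add: mult.commute)

lemma pdv_mult:
  assumes "pdv p i x" "pdv p j y" shows "pdv p (i + j) (x * y)"
proof -
  have "x * y / of_nat p ^ (i + j) = (x / of_nat p ^ i) * (y / of_nat p ^ j)"
    by (simp add: power_add)
  moreover have "pint p ((x / of_nat p ^ i) * (y / of_nat p ^ j))"
    using assms unfolding pdv_def by (intro pint_mult)
  ultimately show ?thesis unfolding pdv_def by (simp only:)
qed

lemma pdv_pint: "p > 0 \<Longrightarrow> pdv p j x \<Longrightarrow> pint p x"
proof -
  assume "pdv p j x" "p > 0"
  then have "pint p ((x / of_nat p ^ j) * of_nat (p ^ j))" unfolding pdv_def by (intro pint_mult) auto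
  moreover have "(x / of_nat p ^ j) * of_nat (p ^ j) = x"
    using \<open>p > 0\<close> by auto
  ultimately show ?thesis by simp
qed

lemma pdv_mono:
  assumes "pdv p j x" "i \<le> j" "p > 0" shows "pdv p i x"
proof -
  obtain k where k: "j = i + k" using assms(2) le_Suc_ex by blast
  have "x / of_nat p ^ i = (x / of_nat p ^ j) * of_nat (p ^ k)"
    using assms(3) by (auto simp: k power_add)
  moreover have "pint p ((x / of_nat p ^ j) * of_nat (p ^ k))" using assms(1) unfolding pdv_def
    by (intro pint_mult pint_nat)
  ultimately show ?thesis unfolding pdv_def by (simp only:)
qed

lemma pdv_ppow [intro]: "pint p y \<Longrightarrow> pdv p j (of_nat p ^ j * y)"
  unfolding pdv_def by (cases "p = 0") auto

lemma pdv_ppow' [intro]: "pint p y \<Longrightarrow> pdv p j (y * of_nat p ^ j)"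
  using pdv_ppow[of p y j] by (simp add: mult.commute)

lemma pdv_div_nat:
  assumes "prime p" "pdv p j x" "\<not> p dvd k"
  shows "pdv p j (x / of_nat k)"
  using pdv_mult_pint[OF assms(2) pint_inv_nat[OF assms(1,3)]] by simp

lemma pdv_prod_diff:
  assumes "\<And>i. i \<in> A \<Longrightarrow> pint p (f i)" "\<And>i. i \<in> A \<Longrightarrow> pint p (g i)"
      "\<And>i. i \<in> A \<Longrightarrow> pdv p j (f i - g i)"
  shows "pdv p j ((\<Prod>i\<in>A. f i) - (\<Prod>i\<in>A. g i))"
  using assms
proof (induction A rule: infinite_finite_induct)
  case (insert a A)
  have "(\<Prod>i\<in>insert a A. f i) - (\<Prod>i\<in>insert a A. g i)
      = (f a - g a) * (\<Prod>i\<in>A. f i) + g a * ((\<Prod>i\<in>A. f i) - (\<Prod>i\<in>A. g i))"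
    using insert by (simp add: algebra_simps)
  also have "pdv p j \<dots>" using insert by (intro pdv_add pdv_mult_pint pdv_mult_pint' pint_prod) auto
  finally show ?case .
qed auto

lemma rat_cong_pdv:
  assumes "prime p" "pdv p j (a - b)"
  shows "rat_cong a b (p ^ j)"
proof -
  obtain N D where q: "quotient_of (a - b) = (N, D)" by (cases "quotient_of (a - b)") auto
  have D: "D > 0" "coprime N D" using q quotient_of_denom_pos quotient_of_coprime by blast+
  have ab: "a - b = of_int N / of_int D" using q quotient_of_div by blast
  from assms(2) obtain A B where AB: "coprime B (int p)" "(a - b) / of_nat p ^ j = of_int A / of_int B"
    unfolding pdv_def pint_def by auto
  have B0: "B \<noteq> 0" using AB(1) assms(1) using prime_gt_1_nat[OF assms(1)] by (auto)
  have pp: "(of_nat p ^ j :: rat) \<noteq> 0" using assms(1) prime_gt_0_nat by auto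
  have "a - b = ((a - b) / of_nat p ^ j) * of_nat p ^ j" using pp by simp
  also have "\<dots> = of_int A * of_nat p ^ j / (of_int B :: rat)" using AB(2) by simp
  finally have "of_int N / of_int D = of_int A * of_nat p ^ j / (of_int B :: rat)"
    using ab by simp
  then have "of_int (N * B) = (of_int (A * int p ^ j * D) :: rat)"
    using D B0 by (simp add: field_simps)
  then have eq: "N * B = A * int p ^ j * D" by (simp only: of_int_eq_iff)
  have h1: "int p ^ j dvd N * B" using eq by simp
  have h0: "coprime (int p) B" using AB(1) coprime_commute by blast
  have h2: "coprime (int p ^ j) B" using h0 by simp
  have Ndvd: "int p ^ j dvd N" using h1 h2 coprime_dvd_mult_left_iff by blast
  have h3: "D dvd N * B" using eq by simp
  have h4: "coprime D N" using D(2) coprime_commute by blast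
  have DB: "D dvd B" using coprime_dvd_mult_right_iff[of D N B] h3 h4 by simp
  have "coprime D (int p)" by (rule coprime_divisors[OF DB dvd_refl AB(1)])
  then have "coprime D (int (p ^ j))" by simp
  then show ?thesis unfolding rat_cong_def q using Ndvd by simp
qed


definition ppint :: "nat \<Rightarrow> rat poly \<Rightarrow> bool" where
  "ppint p P \<longleftrightarrow> (\<forall>i. pint p (coeff P i))"

definition ppdv :: "nat \<Rightarrow> nat \<Rightarrow> rat poly \<Rightarrow> bool" where
  "ppdv p j P \<longleftrightarrow> (\<forall>i. pdv p j (coeff P i))"

lemma ppintD: "ppint p P \<Longrightarrow> pint p (coeff P i)" unfolding ppint_def by auto
lemma ppdvD: "ppdv p j P \<Longrightarrow> pdv p j (coeff P i)" unfolding ppdv_def by auto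

lemma ppint_0 [simp]: "ppint p 0" unfolding ppint_def by simp
lemma ppdv_0 [simp]: "ppdv p j 0" unfolding ppdv_def by simp

lemma ppint_pCons [simp]: "ppint p (pCons a P) \<longleftrightarrow> pint p a \<and> ppint p P"
  unfolding ppint_def by (auto simp: coeff_pCons split: nat.splits)

lemma ppdv_pCons [simp]: "ppdv p j (pCons a P) \<longleftrightarrow> pdv p j a \<and> ppdv p j P"
  unfolding ppdv_def by (auto simp: coeff_pCons split: nat.splits)

lemma ppint_1 [simp]: "ppint p 1"
  unfolding ppint_def by (auto simp: coeff_1)

lemma ppint_add [intro]: "ppint p P \<Longrightarrow> ppint p Q \<Longrightarrow> ppint p (P + Q)"
  unfolding ppint_def by auto
lemma ppint_uminus [simp]: "ppint p (- P) \<longleftrightarrow> ppint p P"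
  unfolding ppint_def by auto
lemma ppint_diff [intro]: "ppint p P \<Longrightarrow> ppint p Q \<Longrightarrow> ppint p (P - Q)"
  unfolding ppint_def by auto
lemma ppint_smult [intro]: "pint p c \<Longrightarrow> ppint p P \<Longrightarrow> ppint p (smult c P)"
  unfolding ppint_def by auto
lemma ppint_mult [intro]: "ppint p P \<Longrightarrow> ppint p Q \<Longrightarrow> ppint p (P * Q)"
  unfolding ppint_def coeff_mult by (intro allI pint_sum pint_mult) auto
lemma ppint_sum [intro]: "(\<And>i. i \<in> A \<Longrightarrow> ppint p (f i)) \<Longrightarrow> ppint p (\<Sum>i\<in>A. f i)"
  by (induction A rule: infinite_finite_induct) auto
lemma ppint_prod [intro]: "(\<And>i. i \<in> A \<Longrightarrow> ppint p (f i)) \<Longrightarrow> ppint p (\<Prod>i\<in>A. f i)"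
  by (induction A rule: infinite_finite_induct) auto
lemma ppint_power [intro]: "ppint p P \<Longrightarrow> ppint p (P ^ k)"
  by (induction k) auto

lemma ppdv_add [intro]: "ppdv p j P \<Longrightarrow> ppdv p j Q \<Longrightarrow> ppdv p j (P + Q)"
  unfolding ppdv_def by auto
lemma ppdv_uminus [simp]: "ppdv p j (- P) \<longleftrightarrow> ppdv p j P"
  unfolding ppdv_def by auto
lemma ppdv_diff [intro]: "ppdv p j P \<Longrightarrow> ppdv p j Q \<Longrightarrow> ppdv p j (P - Q)"
  unfolding ppdv_def by auto
lemma ppdv_smult [intro]: "pint p c \<Longrightarrow> ppdv p j P \<Longrightarrow> ppdv p j (smult c P)"
  unfolding ppdv_def by auto
lemma ppdv_mult1 [intro]: "ppdv p j P \<Longrightarrow> ppint p Q \<Longrightarrow> ppdv p j (P * Q)"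
  unfolding ppdv_def ppint_def coeff_mult by (intro allI pdv_sum pdv_mult_pint) auto
lemma ppdv_mult2 [intro]: "ppint p P \<Longrightarrow> ppdv p j Q \<Longrightarrow> ppdv p j (P * Q)"
  using ppdv_mult1[of p j Q P] by (simp add: mult.commute)
lemma ppdv_sum [intro]: "(\<And>i. i \<in> A \<Longrightarrow> ppdv p j (f i)) \<Longrightarrow> ppdv p j (\<Sum>i\<in>A. f i)"
  by (induction A rule: infinite_finite_induct) auto

lemma ppint_pcompose [intro]:
  assumes "ppint p P" "ppint p Q" shows "ppint p (pcompose P Q)"
  using assms(1)
proof (induction P)
  case (pCons a P)
  then show ?case using assms(2) by (auto simp: pcompose_pCons)
qed simp

lemma ppdv_pcompose:
  assumes "ppint p P" "ppint p Q1" "ppint p Q2" "ppdv p j (Q1 - Q2)"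
  shows "ppdv p j (pcompose P Q1 - pcompose P Q2)"
  using assms(1)
proof (induction P)
  case (pCons a P)
  then have P: "ppint p P" by simp
  have "pcompose (pCons a P) Q1 - pcompose (pCons a P) Q2
     = (Q1 - Q2) * pcompose P Q1 + Q2 * (pcompose P Q1 - pcompose P Q2)"
    by (simp add: pcompose_pCons algebra_simps)
  also have "ppdv p j \<dots>" using pCons P assms by auto
  finally show ?case .
qed simp

lemma pint_poly [intro]:
  assumes "ppint p P" "pint p x" shows "pint p (poly P x)"
  using assms(1) by (induction P) (auto intro!: pint_add pint_mult pdv_add pdv_mult_pint' simp: assms(2))

lemma pdv_poly [intro]:
  assumes "ppdv p j P" "pint p x" shows "pdv p j (poly P x)"
  using assms(1) by (induction P) (auto intro!: pint_add pint_mult pdv_add pdv_mult_pint' simp: assms(2))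

lemma ppint_shift [intro]: "ppint p P \<Longrightarrow> ppint p (poly_shift n P)"
  unfolding ppint_def by (simp add: coeff_poly_shift)

lemma taylor3:
  fixes Q :: "rat poly"
  shows "poly Q h = coeff Q 0 + coeff Q 1 * h + coeff Q 2 * h^2 + h^3 * poly (poly_shift 3 Q) h"
proof -
  have "Q = pCons (coeff Q 0) (pCons (coeff Q 1) (pCons (coeff Q 2) (poly_shift 3 Q)))"
    proof (rule poly_eqI)
    fix n show "coeff Q n = coeff (pCons (coeff Q 0) (pCons (coeff Q 1) (pCons (coeff Q 2) (poly_shift 3 Q)))) n"
      by (cases n; cases "n - 1"; cases "n - 2") (auto simp: coeff_pCons' coeff_poly_shift numeral_3_eq_3 numeral_2_eq_2)
  qed
  then have "poly Q h = poly (pCons (coeff Q 0) (pCons (coeff Q 1) (pCons (coeff Q 2) (poly_shift 3 Q)))) h"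
    by simp
  also have "\<dots> = coeff Q 0 + coeff Q 1 * h + coeff Q 2 * h^2 + h^3 * poly (poly_shift 3 Q) h"
    by (simp add: power2_eq_square power3_eq_cube ring_distribs mult.assoc mult.left_commute)
  finally show ?thesis .
qed

lemma coeff_mult_012:
  "coeff (P * Q) 0 = coeff P 0 * coeff Q 0"
  "coeff (P * Q) 1 = coeff P 0 * coeff Q 1 + coeff P 1 * coeff Q 0"
  "coeff (P * Q) 2 = coeff P 0 * coeff Q 2 + coeff P 1 * coeff Q 1 + coeff P 2 * coeff Q 0"
  by (simp_all add: coeff_mult numeral_2_eq_2 atMost_Suc algebra_simps)


definition Dp :: "nat \<Rightarrow> rat poly" where
  "Dp k = (\<Prod>j<k. [:- of_nat j, 1:] * [:of_nat j + 1, 1:])"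
definition Wp :: "nat \<Rightarrow> rat poly" where
  "Wp k = (\<Prod>j\<in>{1..<k}. [:- ((of_nat j)^2), 0, 1:])"
definition cc :: "nat \<Rightarrow> rat" where
  "cc k = (-1)^k / (of_nat k * (fact k)^2)"
definition fP :: "nat \<Rightarrow> rat poly" where
  "fP m = (\<Sum>k=1..m. smult (cc k) (Dp k))"
definition phiP :: "nat \<Rightarrow> rat poly" where
  "phiP m = (\<Sum>k=1..m. smult (2 * (-1)^k / (fact k)^2) ([:0,1:] * Wp k))"
definition PiP :: "nat \<Rightarrow> rat poly" where
  "PiP m = (\<Prod>j=1..m. [:1, 0, -1/(of_nat j)^2:])"

lemma poly_Dp: "poly (Dp k) x = (\<Prod>j<k. (x - of_nat j) * (x + of_nat j + 1))"
  unfolding Dp_def by (simp add: poly_prod algebra_simps)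

lemma poly_Wp: "poly (Wp k) x = (\<Prod>j\<in>{1..<k}. x^2 - (of_nat j)^2)"
  unfolding Wp_def by (simp add: poly_prod algebra_simps power2_eq_square)

lemma Wp_Suc: "k \<ge> 1 \<Longrightarrow> poly (Wp (Suc k)) x = poly (Wp k) x * (x^2 - (of_nat k)^2)"
  unfolding poly_Wp by (simp add: prod.atLeastLessThan_Suc)

lemma Dp_eq1: "poly (Dp (Suc k)) x = x * (x + of_nat (Suc k)) * poly (Wp (Suc k)) x"
proof (induction k)
  case 0 then show ?case by (simp add: poly_Dp poly_Wp)
next
  case (Suc k)
  have W: "poly (Wp (Suc (Suc k))) x = poly (Wp (Suc k)) x * (x^2 - (of_nat (Suc k))^2)"
    by (rule Wp_Suc) simp
  have "poly (Dp (Suc (Suc k))) x = poly (Dp (Suc k)) x * ((x - of_nat (Suc k)) * (x + of_nat (Suc k) + 1))"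
    unfolding poly_Dp by simp
  also have "\<dots> = x * (x + of_nat (Suc (Suc k))) * poly (Wp (Suc (Suc k))) x"
    unfolding Suc W by (simp add: algebra_simps power2_eq_square)
  finally show ?case .
qed

lemma Dp_eq2: "poly (Dp (Suc k)) (x - 1) = x * (x - of_nat (Suc k)) * poly (Wp (Suc k)) x"
proof (induction k)
  case 0 then show ?case by (simp add: poly_Dp poly_Wp)
next
  case (Suc k)
  have W: "poly (Wp (Suc (Suc k))) x = poly (Wp (Suc k)) x * (x^2 - (of_nat (Suc k))^2)"
    by (rule Wp_Suc) simp
  have "poly (Dp (Suc (Suc k))) (x - 1) = poly (Dp (Suc k)) (x - 1) * ((x - 1 - of_nat (Suc k)) * (x - 1 + of_nat (Suc k) + 1))"
    unfolding poly_Dp by simp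
  also have "\<dots> = x * (x - of_nat (Suc (Suc k))) * poly (Wp (Suc (Suc k))) x"
    unfolding Suc W by (simp add: algebra_simps power2_eq_square)
  finally show ?case .
qed

lemma Dp_diff: "k \<ge> 1 \<Longrightarrow> poly (Dp k) x - poly (Dp k) (x - 1) = 2 * of_nat k * x * poly (Wp k) x"
proof -
  assume "k \<ge> 1"
  then obtain k' where k: "k = Suc k'" by (cases k) auto
  show ?thesis unfolding k Dp_eq1[of k' x] Dp_eq2[of k' x] by (simp add: algebra_simps)
qed

lemma fP_diff: "poly (fP m) x - poly (fP m) (x - 1) = poly (phiP m) x"
proof -
  have "poly (fP m) x - poly (fP m) (x - 1) = (\<Sum>k=1..m. cc k * (poly (Dp k) x - poly (Dp k) (x - 1)))"
    unfolding fP_def by (simp add: poly_sum sum_subtractf algebra_simps)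
  also have "\<dots> = (\<Sum>k=1..m. 2 * (-1)^k / (fact k)^2 * (x * poly (Wp k) x))"
  proof (rule sum.cong)
    fix k assume "k \<in> {1..m}"
    then have "k \<ge> 1" by simp
    then show "cc k * (poly (Dp k) x - poly (Dp k) (x - 1)) = 2 * (-1)^k / (fact k)^2 * (x * poly (Wp k) x)"
      unfolding Dp_diff[OF \<open>k \<ge> 1\<close>] cc_def by (simp add: field_simps)
  qed simp
  also have "\<dots> = poly (phiP m) x" unfolding phiP_def by (simp add: poly_sum field_simps)
  finally show ?thesis .
qed

lemma PiP_Suc: "poly (PiP (Suc m)) x = poly (PiP m) x * (1 - x^2 / (of_nat (Suc m))^2)"
  unfolding PiP_def by (simp add: poly_prod power2_eq_square right_diff_distrib)

lemma Wp_Pi: "poly (Wp (Suc m)) x = (-1)^m * (fact m)^2 * poly (PiP m) x"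
proof (induction m)
  case 0 then show ?case by (simp add: poly_Wp PiP_def)
next
  case (Suc m)
  have "poly (Wp (Suc (Suc m))) x = poly (Wp (Suc m)) x * (x^2 - (of_nat (Suc m))^2)"
    by (rule Wp_Suc) simp
  also have "\<dots> = (-1)^(Suc m) * (fact (Suc m))^2 * poly (PiP (Suc m)) x"
  proof -
    have q: "(of_nat (Suc m) :: rat) \<noteq> 0" by simp
    have f: "(fact (Suc m) :: rat) = of_nat (Suc m) * fact m" by (simp add: fact_Suc)
    show ?thesis unfolding Suc PiP_Suc f using fact_nonzero[of m, where 'a=rat] q
      by (simp only: power2_eq_square) (simp add: field_simps del: of_nat_Suc)
  qed
  finally show ?case .
qed

lemma phi_Pi: "x * poly (phiP m) x = 2 * (poly (PiP m) x - 1)"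
proof (induction m)
  case 0 then show ?case by (simp add: phiP_def PiP_def)
next
  case (Suc m)
  have "x * poly (phiP (Suc m)) x = x * poly (phiP m) x + 2 * (-1)^(Suc m) / (fact (Suc m))^2 * (x * x * poly (Wp (Suc m)) x)"
    unfolding phiP_def by (simp add: poly_sum algebra_simps)
  also have "\<dots> = 2 * (poly (PiP (Suc m)) x - 1)"
  proof -
    have q: "(of_nat (Suc m) :: rat) \<noteq> 0" by simp
    have f: "(fact (Suc m) :: rat) = of_nat (Suc m) * fact m" by (simp add: fact_Suc)
    show ?thesis unfolding Suc Wp_Pi PiP_Suc f using fact_nonzero[of m, where 'a=rat] q
      by (simp only: power2_eq_square) (simp add: field_simps del: of_nat_Suc)
  qed
  finally show ?case .
qed

lemma Dp_sym: "poly (Dp k) (-1 - x) = poly (Dp k) x"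
  unfolding poly_Dp by (rule prod.cong) (auto simp: algebra_simps)

lemma fP_sym: "poly (fP m) (-1 - x) = poly (fP m) x"
  unfolding fP_def by (simp add: poly_sum Dp_sym)

lemma term1: "k \<ge> 1 \<Longrightarrow> (pochhammer (1/2 :: rat) k)^2 / (pochhammer 1 k)^2 * (1 / of_nat k) = cc k * poly (Dp k) (-1/2)"
proof -
  assume k: "k \<ge> 1"
  have "poly (Dp k) (-1/2) = (\<Prod>j<k. (-1) * ((1/2 + of_nat j) * (1/2 + of_nat j)))"
    unfolding poly_Dp by (rule prod.cong) (auto simp: field_simps)
  also have "\<dots> = (\<Prod>j<k. (-1::rat)) * ((\<Prod>j<k. (1/2 + of_nat j)) * (\<Prod>j<k. (1/2 + of_nat j)))"
    by (simp only: prod.distrib)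
  also have "\<dots> = (-1)^k * ((\<Prod>j<k. (1/2 + of_nat j)) * (\<Prod>j<k. (1/2 + of_nat j)))"
    by simp
  also have "\<dots> = (-1)^k * (pochhammer (1/2 :: rat) k)^2"
    by (simp add: pochhammer_prod power2_eq_square atLeast0LessThan)
  finally show ?thesis unfolding cc_def pochhammer_fact[symmetric] by (simp add: field_simps)
qed


lemma poly_ext: "(\<And>x. poly P x = poly Q x) \<Longrightarrow> P = (Q :: rat poly)"
  using poly_eq_poly_eq_iff by blast

lemma Dp_factor: "k \<ge> 1 \<Longrightarrow> Dp k = [:0,1:] * [:of_nat k, 1:] * Wp k"
proof -
  assume "k \<ge> 1"
  then obtain k' where k: "k = Suc k'" by (cases k) auto
  show ?thesis unfolding k by (rule poly_ext) (simp add: Dp_eq1 algebra_simps)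
qed

lemma coeff_Wp_1: "coeff (Wp k) 1 = 0"
proof (induction k)
  case 0 then show ?case by (simp add: Wp_def)
next
  case (Suc k)
  show ?case
  proof (cases "k = 0")
    case True then show ?thesis by (simp add: Wp_def)
  next
    case False
    then have "Wp (Suc k) = Wp k * [:- ((of_nat k)^2), 0, 1:]"
      unfolding Wp_def by (simp add: prod.atLeastLessThan_Suc)
    then show ?thesis using Suc by (simp add: coeff_mult_012)
  qed
qed

lemma coeff_Wp_0: "coeff (Wp k) 0 = (\<Prod>j\<in>{1..<k}. - ((of_nat j)^2))"
  unfolding poly_0_coeff_0[symmetric] poly_Wp by simp

lemma prod_negsq: "(\<Prod>j\<in>{1..<Suc k}. - ((of_nat j)^2) :: rat) = (-1)^k * (fact k)^2"
  by (induction k) (simp_all add: prod.atLeastLessThan_Suc fact_Suc power2_eq_square algebra_simps)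

lemma coeff_Dp_2: "coeff (Dp (Suc k)) 2 = (-1)^k * (fact k)^2"
proof -
  have "coeff (Dp (Suc k)) 2 = coeff ([:of_nat (Suc k), 1:] * Wp (Suc k)) 1"
    unfolding Dp_factor[of "Suc k", simplified] mult.assoc
    by (simp add: numeral_2_eq_2 del: of_nat_Suc)
  also have "\<dots> = coeff (Wp (Suc k)) 0"
    using coeff_Wp_1[of "Suc k"] by (simp add: coeff_mult_012)
  also have "\<dots> = (-1)^k * (fact k)^2" unfolding coeff_Wp_0 prod_negsq ..
  finally show ?thesis .
qed

lemma coeff_fP_2: "coeff (fP m) 2 = - (\<Sum>k=1..m. 1 / (of_nat k)^3)"
proof -
  have "coeff (fP m) 2 = (\<Sum>k=1..m. cc k * coeff (Dp k) 2)"
    unfolding fP_def by (simp add: coeff_sum)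
  also have "\<dots> = (\<Sum>k=1..m. - (1 / (of_nat k)^3))"
  proof (rule sum.cong)
    fix k assume "k \<in> {1..m}"
    then obtain k' where k: "k = Suc k'" by (cases k) auto
    have f: "(fact (Suc k') :: rat) = of_nat (Suc k') * fact k'" by (simp add: fact_Suc)
    show "cc k * coeff (Dp k) 2 = - (1 / (of_nat k)^3)"
      unfolding k coeff_Dp_2 cc_def f using fact_nonzero[of k', where 'a=rat]
      by (simp add: field_simps power2_eq_square power3_eq_cube power_add[symmetric] del: of_nat_Suc)
  qed simp
  finally show ?thesis by (simp add: sum_negf)
qed

lemma fP_shift_diff:
  "pcompose (fP m) [:a, 1:] - pcompose (fP m) [:a - 1, 1:] = pcompose (phiP m) [:a, 1:]"
  by (rule poly_ext) (simp add: poly_pcompose fP_diff[symmetric] algebra_simps)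

lemma phi_Pi_poly: "[:0,1:] * phiP m = smult 2 (PiP m - 1)"
  by (rule poly_ext) (simp add: phi_Pi)


lemma lin_prod_coeffs:
  fixes a :: "nat \<Rightarrow> rat" and s :: rat
  assumes "finite A" "\<And>j. j \<in> A \<Longrightarrow> a j \<noteq> 0"
  shows "coeff (\<Prod>j\<in>A. [:a j, s:]) 0 = (\<Prod>j\<in>A. a j)
       \<and> coeff (\<Prod>j\<in>A. [:a j, s:]) 1 = s * (\<Prod>j\<in>A. a j) * (\<Sum>j\<in>A. 1 / a j)
       \<and> coeff (\<Prod>j\<in>A. [:a j, s:]) 2 = s^2 * (\<Prod>j\<in>A. a j) * (((\<Sum>j\<in>A. 1 / a j))^2 - (\<Sum>j\<in>A. (1 / a j)^2)) / 2"
  using assms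
proof (induction A rule: finite_induct)
  case empty then show ?case by (simp add: numeral_2_eq_2)
next
  case (insert x F)
  define L where "L = (\<Prod>j\<in>F. [:a j, s:])"
  define PPi where "PPi = (\<Prod>j\<in>F. a j)"
  define sg where "sg = (\<Sum>j\<in>F. 1 / a j)"
  define ta where "ta = (\<Sum>j\<in>F. (1 / a j)^2)"
  have IH: "coeff L 0 = PPi" "coeff L 1 = s * PPi * sg" "coeff L 2 = s^2 * PPi * (sg^2 - ta) / 2"
    using insert unfolding L_def PPi_def sg_def ta_def by auto
  have ax: "a x \<noteq> 0" using insert by auto
  have eq: "(\<Prod>j\<in>insert x F. [:a j, s:]) = [:a x, s:] * L" unfolding L_def using insert by simp
  have c: "coeff [:a x, s:] 0 = a x" "coeff [:a x, s:] 1 = s" "coeff [:a x, s:] 2 = 0"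
    by (simp_all add: numeral_2_eq_2)
  show ?case unfolding eq coeff_mult_012 c IH
    using insert ax unfolding PPi_def[symmetric] sg_def[symmetric] ta_def[symmetric]
    by (simp add: PPi_def sg_def ta_def field_simps power2_eq_square)
qed

lemma F1: "(\<Prod>j\<in>{1..n}. (of_nat j + of_nat k :: rat)) * fact k = fact (n + k)"
proof (induction n)
  case 0 then show ?case by simp
next
  case (Suc n)
  have "(\<Prod>j\<in>{1..Suc n}. (of_nat j + of_nat k :: rat)) * fact k
      = ((\<Prod>j\<in>{1..n}. (of_nat j + of_nat k :: rat)) * fact k) * (of_nat (Suc n) + of_nat k)"
    by (simp add: algebra_simps)
  also have "\<dots> = fact (n + k) * of_nat (Suc (n + k))" unfolding Suc by simp
  also have "\<dots> = fact (Suc n + k)" by (simp add: fact_Suc)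
  finally show ?case .
qed

lemma F2: "k \<le> n \<Longrightarrow> (\<Prod>j<k. (of_nat n - of_nat j :: rat)) * fact (n - k) = fact n"
proof (induction k)
  case 0 then show ?case by simp
next
  case (Suc k)
  then have kn: "k < n" by simp
  have f: "(fact (n - k) :: rat) = of_nat (n - k) * fact (n - Suc k)"
    using kn by (metis Suc_diff_Suc fact_Suc)
  have "(\<Prod>j<Suc k. (of_nat n - of_nat j :: rat)) * fact (n - Suc k)
      = (\<Prod>j<k. (of_nat n - of_nat j :: rat)) * (of_nat (n - k) * fact (n - Suc k))"
    using kn by (simp add: of_nat_diff algebra_simps)
  also have "\<dots> = fact n" using Suc kn f by simp
  finally show ?case .
qed

lemma F3: "(\<Prod>j<k. (of_nat n + of_nat j + 1 :: rat)) * fact n = fact (n + k)"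
proof (induction k)
  case 0 then show ?case by simp
next
  case (Suc k)
  have "(\<Prod>j<Suc k. (of_nat n + of_nat j + 1 :: rat)) * fact n
      = ((\<Prod>j<k. (of_nat n + of_nat j + 1 :: rat)) * fact n) * (of_nat n + of_nat k + 1)"
    by (simp add: algebra_simps)
  also have "\<dots> = fact (n + k) * of_nat (Suc (n + k))" unfolding Suc by simp
  also have "\<dots> = fact (n + Suc k)" by (simp add: fact_Suc)
  finally show ?case .
qed

lemma G0: "(\<Prod>i\<in>{1..<Suc k}. - (of_nat i :: rat)) = (-1)^k * fact k"
  by (induction k) (simp_all add: prod.atLeastLessThan_Suc fact_Suc algebra_simps)

lemma G1: "(\<Prod>j\<in>{1..<k}. (of_nat j - of_nat k :: rat)) = (\<Prod>i\<in>{1..<k}. - (of_nat i :: rat))"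
proof -
  have "(\<Prod>j\<in>{1..<k}. (of_nat j - of_nat k :: rat)) = (\<Prod>i\<in>{1..<k}. (of_nat (k + 1 - Suc i) - of_nat k :: rat))"
    by (rule prod.atLeastLessThan_rev)
  also have "\<dots> = (\<Prod>i\<in>{1..<k}. - (of_nat i :: rat))"
    by (rule prod.cong) (auto simp: of_nat_diff)
  finally show ?thesis .
qed

lemma F4: "1 \<le> k \<Longrightarrow> k \<le> n \<Longrightarrow>
  (\<Prod>j\<in>{1..n}-{k}. (of_nat j - of_nat k :: rat)) = (-1)^(k-1) * fact (k-1) * fact (n-k)"
proof (induction n)
  case 0 then show ?case by simp
next
  case (Suc n)
  show ?case
  proof (cases "k = Suc n")
    case True
    then have "{1..Suc n} - {k} = {1..<k}" by auto
    moreover obtain k' where k': "k = Suc k'" using Suc by (cases k) auto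
    ultimately have "(\<Prod>j\<in>{1..Suc n}-{k}. (of_nat j - of_nat k :: rat)) = (\<Prod>j\<in>{1..<k}. (of_nat j - of_nat k :: rat))"
      by simp
    also have "\<dots> = (\<Prod>i\<in>{1..<Suc k'}. - (of_nat i :: rat))" unfolding G1 k' ..
    also have "\<dots> = (-1)^k' * fact k'" by (rule G0)
    also have "\<dots> = (-1)^(k-1) * fact (k-1) * fact (Suc n - k)" using True k' by simp
    finally show ?thesis .
  next
    case False
    then have kn: "k \<le> n" using Suc by simp
    have "{1..Suc n} - {k} = insert (Suc n) ({1..n} - {k})" using False by auto
    then have "(\<Prod>j\<in>{1..Suc n}-{k}. (of_nat j - of_nat k :: rat)) = (of_nat (Suc n) - of_nat k) * (\<Prod>j\<in>{1..n}-{k}. (of_nat j - of_nat k :: rat))"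
      by simp
    also have "\<dots> = (of_nat (Suc n) - of_nat k) * ((-1)^(k-1) * fact (k-1) * fact (n-k))"
      using Suc kn by simp
    also have "\<dots> = (-1)^(k-1) * fact (k-1) * fact (Suc n - k)"
    proof -
      have e: "Suc n - k = Suc (n - k)" using kn by simp
      have f: "(fact (Suc n - k) :: rat) = (of_nat n + 1 - of_nat k) * fact (n - k)"
        unfolding e fact_Suc using kn by (simp add: of_nat_diff)
      show ?thesis unfolding f using kn by (simp add: of_nat_diff algebra_simps)
    qed
    finally show ?thesis .
  qed
qed

definition PFP :: "nat \<Rightarrow> rat poly" where "PFP n = (\<Prod>j\<in>{1..n}. [:of_nat j, -1:])"
definition PFQ :: "nat \<Rightarrow> rat poly" where "PFQ n = (\<Prod>j\<in>{1..n}. [:of_nat j, 1:])"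
definition PFM :: "nat \<Rightarrow> nat \<Rightarrow> rat poly" where "PFM n k = (\<Prod>j\<in>{1..n}-{k}. [:of_nat j, 1:])"
definition beta :: "nat \<Rightarrow> nat \<Rightarrow> rat" where "beta n k = of_nat k * cc k * poly (Dp k) (of_nat n)"

lemma key_eval:
  assumes "1 \<le> k" "k \<le> n"
  shows "(\<Prod>j\<in>{1..n}. (of_nat j + of_nat k :: rat)) = - of_nat k * beta n k * (\<Prod>j\<in>{1..n}-{k}. (of_nat j - of_nat k))"
proof -
  obtain k' where k': "k = Suc k'" using assms by (cases k) auto
  have D: "poly (Dp k) (of_nat n) = (\<Prod>j<k. (of_nat n - of_nat j)) * (\<Prod>j<k. (of_nat n + of_nat j + 1))"
    unfolding poly_Dp by (simp add: prod.distrib)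
  have e1: "(\<Prod>j\<in>{1..n}. (of_nat j + of_nat k :: rat)) = fact (n + k) / fact k"
    using F1[where n=n and k=k] by (simp add: field_simps)
  have e2: "(\<Prod>j<k. (of_nat n - of_nat j :: rat)) = fact n / fact (n - k)"
    using F2[OF assms(2)] by (simp add: field_simps)
  have e3: "(\<Prod>j<k. (of_nat n + of_nat j + 1 :: rat)) = fact (n + k) / fact n"
    using F3[where n=n and k=k] by (simp add: field_simps)
  have fk: "(fact k :: rat) = of_nat k * fact k'" unfolding k' by (simp add: fact_Suc)
  have nz: "(fact n :: rat) \<noteq> 0" "(fact (n - k) :: rat) \<noteq> 0" "(fact k' :: rat) \<noteq> 0" "(of_nat k :: rat) \<noteq> 0"
    using assms by auto
  have sgn: "(-1::rat)^k * (-1)^k' = -1" unfolding k' by simp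
  have L: "(\<Prod>j\<in>{1..n}. (of_nat j + of_nat k :: rat)) = fact (n + k) / (of_nat k * fact k')"
    unfolding e1 fk ..
  have R: "- of_nat k * beta n k * (\<Prod>j\<in>{1..n}-{k}. (of_nat j - of_nat k))
     = - of_nat k * (of_nat k * ((-1)^k / (of_nat k * (of_nat k * fact k')^2)) * ((fact n / fact (n - k)) * (fact (n + k) / fact n))) * ((-1)^k' * fact k' * fact (n - k))"
    unfolding beta_def cc_def D e2 e3 F4[OF assms] fk by (simp add: k')
  have aux: "X / (kk * C) = - kk * (kk * (s1 / (kk * (kk * C)^2)) * ((A / B) * (X / A))) * (s2 * C * B)"
    if "A \<noteq> 0" "B \<noteq> 0" "C \<noteq> 0" "kk \<noteq> 0" "s1 * s2 = -1" for A B C kk s1 s2 X :: rat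
  proof -
    have "- kk * (kk * (s1 / (kk * (kk * C)^2)) * ((A / B) * (X / A))) * (s2 * C * B) = - (s1 * s2) * (X / (kk * C))"
      using that by (simp add: field_simps power2_eq_square)
    then show ?thesis using that by simp
  qed
  show ?thesis unfolding L R by (rule aux) (use nz sgn in auto)
qed


lemma deg_lin_prod: "degree (\<Prod>j\<in>A. [:c j, s:]) \<le> card A" for c :: "nat \<Rightarrow> rat"
proof (induction A rule: infinite_finite_induct)
  case (insert x F)
  have "degree (\<Prod>j\<in>insert x F. [:c j, s:]) = degree ([:c x, s:] * (\<Prod>j\<in>F. [:c j, s:]))"
    using insert by simp
  also have "\<dots> \<le> degree [:c x, s:] + degree (\<Prod>j\<in>F. [:c j, s:])" by (rule degree_mult_le)
  also have "\<dots> \<le> 1 + card F" using insert by (intro add_mono) auto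
  finally show ?case using insert by simp
qed auto

lemma X_mult: "[:0, 1:] * Y = pCons 0 Y" for Y :: "rat poly"
  by (simp add: mult_pCons_left)

lemma PF_identity:
  assumes n: "n \<ge> 1"
  shows "PFP n = PFQ n + [:0,1:] * (\<Sum>k\<in>{1..n}. smult (beta n k) (PFM n k))"
proof (rule poly_eqI_degree[where A = "(\<lambda>k. - of_nat k) ` {0..n}"])
  have inj: "inj_on (\<lambda>k. - (of_nat k :: rat)) {0..n}" by (auto simp: inj_on_def)
  have card: "card ((\<lambda>k. - (of_nat k :: rat)) ` {0..n}) = n + 1" using card_image[OF inj] by simp
  have d1: "degree (PFP n) \<le> n" unfolding PFP_def using deg_lin_prod[of "\<lambda>j. of_nat j" "-1" "{1..n}"] by simp
  have dM: "degree (PFM n k) \<le> n - 1" if "k \<in> {1..n}" for k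
    unfolding PFM_def using deg_lin_prod[of "\<lambda>j. of_nat j" 1 "{1..n}-{k}"] that by simp
  have dS: "degree (\<Sum>k\<in>{1..n}. smult (beta n k) (PFM n k)) \<le> n - 1"
  proof -
    have "degree (smult (beta n k) (PFM n k)) \<le> n - 1" if "k \<in> {1..n}" for k
      using order.trans[OF degree_smult_le dM[OF that]] .
    then show ?thesis by (intro degree_sum_le) auto
  qed
  have d2: "degree (PFQ n + [:0,1:] * (\<Sum>k\<in>{1..n}. smult (beta n k) (PFM n k))) \<le> n"
  proof -
    have "degree (PFQ n) \<le> n" unfolding PFQ_def using deg_lin_prod[of "\<lambda>j. of_nat j" 1 "{1..n}"] by simp
    moreover have "degree ([:0,1:] * (\<Sum>k\<in>{1..n}. smult (beta n k) (PFM n k))) \<le> n"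
      unfolding X_mult using dS n by (cases "(\<Sum>k\<in>{1..n}. smult (beta n k) (PFM n k)) = 0") auto
    ultimately show ?thesis using degree_add_le by blast
  qed
  show "degree (PFP n) < card ((\<lambda>k. - (of_nat k :: rat)) ` {0..n})" using d1 card by simp
  show "degree (PFQ n + [:0,1:] * (\<Sum>k\<in>{1..n}. smult (beta n k) (PFM n k))) < card ((\<lambda>k. - (of_nat k :: rat)) ` {0..n})"
    using d2 card by simp
  fix z assume "z \<in> (\<lambda>k. - (of_nat k :: rat)) ` {0..n}"
  then obtain k where k: "k \<in> {0..n}" "z = - of_nat k" by auto
  show "poly (PFP n) z = poly (PFQ n + [:0,1:] * (\<Sum>k\<in>{1..n}. smult (beta n k) (PFM n k))) z"
  proof (cases "k = 0")
    case True
    then show ?thesis unfolding k PFP_def PFQ_def by (simp add: poly_prod)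
  next
    case False
    then have k1: "1 \<le> k" "k \<le> n" using k by auto
    have Q0: "poly (PFQ n) z = 0" unfolding PFQ_def k poly_prod
      using k1 by (intro prod_zero) (auto intro!: bexI[of _ k])
    have M0: "poly (PFM n i) z = 0" if "i \<in> {1..n}" "i \<noteq> k" for i
      unfolding PFM_def k poly_prod using k1 that by (intro prod_zero) (auto intro!: bexI[of _ k])
    have "poly (\<Sum>i\<in>{1..n}. smult (beta n i) (PFM n i)) z = (\<Sum>i\<in>{1..n}. beta n i * poly (PFM n i) z)"
      by (simp add: poly_sum)
    also have "\<dots> = beta n k * poly (PFM n k) z + (\<Sum>i\<in>{1..n}-{k}. beta n i * poly (PFM n i) z)"
      by (rule sum.remove) (use k1 in auto)
    also have "(\<Sum>i\<in>{1..n}-{k}. beta n i * poly (PFM n i) z) = 0"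
      by (rule sum.neutral) (use M0 in auto)
    finally have S: "poly (\<Sum>i\<in>{1..n}. smult (beta n i) (PFM n i)) z = beta n k * poly (PFM n k) z" by simp
    have PM: "poly (PFM n k) z = (\<Prod>j\<in>{1..n}-{k}. (of_nat j - of_nat k))"
      unfolding PFM_def k poly_prod by simp
    have PP: "poly (PFP n) z = (\<Prod>j\<in>{1..n}. (of_nat j + of_nat k))"
      unfolding PFP_def k poly_prod by simp
    have "poly (PFQ n + [:0,1:] * (\<Sum>i\<in>{1..n}. smult (beta n i) (PFM n i))) z
        = poly (PFQ n) z + z * poly (\<Sum>i\<in>{1..n}. smult (beta n i) (PFM n i)) z" by simp
    also have "\<dots> = 0 + z * (beta n k * poly (PFM n k) z)" unfolding Q0 S ..
    also have "\<dots> = - of_nat k * beta n k * (\<Prod>j\<in>{1..n}-{k}. (of_nat j - of_nat k))"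
      unfolding PM by (simp add: k(2))
    finally show ?thesis unfolding PP key_eval[OF k1] by simp
  qed
qed

lemma PF_sums:
  assumes n: "n \<ge> 1"
  shows "(\<Sum>k=1..n. cc k * poly (Dp k) (of_nat n)) = -2 * harm n"
    and "(\<Sum>k=1..n. cc k / of_nat k * poly (Dp k) (of_nat n)) = -2 * (harm n)^2"
proof -
  define F where "F = (fact n :: rat)"
  define H where "H = harm n"
  define H2 where "H2 = (\<Sum>j\<in>{1..n}. (1 / (of_nat j :: rat))^2)"
  define Sm where "Sm = (\<Sum>k\<in>{1..n}. smult (beta n k) (PFM n k))"
  have F0: "F \<noteq> 0" unfolding F_def by simp
  have prodj: "(\<Prod>j\<in>{1..n}. (of_nat j :: rat)) = F"
    unfolding F_def fact_prod by simp
  have Hd: "(\<Sum>j\<in>{1..n}. 1 / (of_nat j :: rat)) = H" unfolding H_def harm_def ..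
  have nz: "\<And>j. j \<in> {1..n} \<Longrightarrow> (of_nat j :: rat) \<noteq> 0" by auto
  note LP = lin_prod_coeffs[of "{1..n}" "\<lambda>j. of_nat j" "-1", OF _ nz, simplified prodj Hd H2_def[symmetric]]
  note LQ = lin_prod_coeffs[of "{1..n}" "\<lambda>j. of_nat j" 1, OF _ nz, simplified prodj Hd H2_def[symmetric]]
  have P1: "coeff (PFP n) 1 = - F * H" using LP unfolding PFP_def by simp
  have P2: "coeff (PFP n) 2 = F * (H^2 - H2) / 2" using LP unfolding PFP_def by simp
  have Q1: "coeff (PFQ n) 1 = F * H" using LQ unfolding PFQ_def by simp
  have Q2: "coeff (PFQ n) 2 = F * (H^2 - H2) / 2" using LQ unfolding PFQ_def by simp
  have M: "coeff (PFM n k) 0 = F / of_nat k \<and> coeff (PFM n k) 1 = F / of_nat k * (H - 1 / of_nat k)"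
    if k: "k \<in> {1..n}" for k
  proof -
    have nz': "\<And>j. j \<in> {1..n} - {k} \<Longrightarrow> (of_nat j :: rat) \<noteq> 0" by auto
    have pr: "F = of_nat k * (\<Prod>j\<in>{1..n}-{k}. (of_nat j :: rat))"
      unfolding prodj[symmetric] by (rule prod.remove) (use k in auto)
    have sr: "H = 1 / of_nat k + (\<Sum>j\<in>{1..n}-{k}. 1 / (of_nat j :: rat))"
      unfolding Hd[symmetric] by (rule sum.remove) (use k in auto)
    have kz: "(of_nat k :: rat) \<noteq> 0" using k by auto
    have pr': "(\<Prod>j\<in>{1..n}-{k}. (of_nat j :: rat)) = F / of_nat k" using pr kz by (simp add: field_simps)
    have sr': "(\<Sum>j\<in>{1..n}-{k}. 1 / (of_nat j :: rat)) = H - 1 / of_nat k" using sr by simp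
    show ?thesis using lin_prod_coeffs[of "{1..n}-{k}" "\<lambda>j. of_nat j" 1, OF _ nz'] unfolding PFM_def pr' sr' by simp
  qed
  have cS: "coeff Sm i = (\<Sum>k\<in>{1..n}. beta n k * coeff (PFM n k) i)" for i
    unfolding Sm_def by (simp add: coeff_sum)
  have id: "PFP n = PFQ n + pCons 0 Sm" using PF_identity[OF n] unfolding Sm_def X_mult .
  have e1: "coeff (PFP n) 1 = coeff (PFQ n) 1 + coeff Sm 0"
    by (subst id) simp
  have e2: "coeff (PFP n) 2 = coeff (PFQ n) 2 + coeff Sm 1"
    by (subst id) (simp add: numeral_2_eq_2)
  have s1: "coeff Sm 0 = F * (\<Sum>k\<in>{1..n}. beta n k / of_nat k)"
    unfolding cS by (simp add: M sum_distrib_left mult.commute)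
  have s2: "coeff Sm 1 = F * (\<Sum>k\<in>{1..n}. beta n k / of_nat k * (H - 1 / of_nat k))"
    unfolding cS sum_distrib_left
  proof (rule sum.cong)
    fix k assume "k \<in> {1..n}"
    then show "beta n k * coeff (PFM n k) 1 = F * (beta n k / of_nat k * (H - 1 / of_nat k))"
      using M[of k] by simp
  qed simp
  have "F * (\<Sum>k\<in>{1..n}. beta n k / of_nat k) = F * (-2 * H)"
    using e1 unfolding P1 Q1 s1 by (simp add: algebra_simps)
  then have A: "(\<Sum>k\<in>{1..n}. beta n k / of_nat k) = -2 * H"
    using F0 by (simp only: mult_cancel_left) simp
  have B0: "(\<Sum>k\<in>{1..n}. beta n k / of_nat k * (H - 1 / of_nat k)) = 0"
    using e2 unfolding P2 Q2 s2 using F0 by simp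
  have "(\<Sum>k\<in>{1..n}. beta n k / of_nat k * (H - 1 / of_nat k))
      = (\<Sum>k\<in>{1..n}. H * (beta n k / of_nat k) - beta n k / (of_nat k)^2)"
    by (rule sum.cong) (auto simp: field_simps power2_eq_square)
  also have "\<dots> = H * (\<Sum>k\<in>{1..n}. beta n k / of_nat k) - (\<Sum>k\<in>{1..n}. beta n k / (of_nat k)^2)"
    by (simp only: sum_subtractf sum_distrib_left)
  finally have "(\<Sum>k\<in>{1..n}. beta n k / of_nat k * (H - 1 / of_nat k))
      = H * (\<Sum>k\<in>{1..n}. beta n k / of_nat k) - (\<Sum>k\<in>{1..n}. beta n k / (of_nat k)^2)" .
  then have B: "(\<Sum>k\<in>{1..n}. beta n k / (of_nat k)^2) = -2 * H^2"
    using B0 A by (simp add: power2_eq_square)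
  have b1: "beta n k / of_nat k = cc k * poly (Dp k) (of_nat n)" if "k \<in> {1..n}" for k
    using that unfolding beta_def by simp
  have b2: "beta n k / (of_nat k)^2 = cc k / of_nat k * poly (Dp k) (of_nat n)" if "k \<in> {1..n}" for k
    using that unfolding beta_def by (simp add: power2_eq_square)
  have "(\<Sum>k=1..n. cc k * poly (Dp k) (of_nat n)) = (\<Sum>k=1..n. beta n k / of_nat k)"
    by (rule sum.cong[OF refl]) (simp add: b1)
  then show "(\<Sum>k=1..n. cc k * poly (Dp k) (of_nat n)) = -2 * harm n"
    using A unfolding H_def by simp
  have "(\<Sum>k=1..n. cc k / of_nat k * poly (Dp k) (of_nat n)) = (\<Sum>k=1..n. beta n k / (of_nat k)^2)"
    by (rule sum.cong[OF refl]) (simp add: b2)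
  then show "(\<Sum>k=1..n. cc k / of_nat k * poly (Dp k) (of_nat n)) = -2 * (harm n)^2"
    using B unfolding H_def by simp
qed


lemma wilson_prod:
  assumes "prime p"
  shows "[(\<Prod>r\<in>{1..p-1}. int r) = -1] (mod int p)"
proof -
  have "(\<Prod>r\<in>{1..p-1}. int r) = fact (p - 1)"
    by (simp add: fact_prod)
  then show ?thesis using wilson_theorem[OF assms] by simp
qed

lemma shift_prod:
  assumes p: "prime p" and x: "1 \<le> x" "x < p"
  shows "[(\<Prod>j\<in>{1..p-1}-{p-x}. int j + int x) = (\<Prod>r\<in>{1..p-1}-{x}. int r)] (mod int p)"
proof -
  define g where "g j = (j + x) mod p" for j
  define D where "D = {1..p-1}-{p-x}"
  define R where "R = {1..p-1}-{x}"
  have p1: "p > 1" using prime_gt_1_nat[OF p] .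
  have sub: "g ` D \<subseteq> R"
  proof
    fix y assume "y \<in> g ` D"
    then obtain j where j: "j \<in> D" "y = g j" by auto
    have j1: "1 \<le> j" "j \<le> p - 1" "j \<noteq> p - x" using j(1) unfolding D_def by auto
    show "y \<in> R"
    proof (cases "j + x < p")
      case True
      then have "y = j + x" unfolding j g_def by simp
      then show ?thesis unfolding R_def using True j1 by auto
    next
      case False
      then have "j + x \<ge> p" by simp
      moreover have "j + x - p < p" using j1 x by linarith
      ultimately have "y = j + x - p" unfolding j g_def
        by (metis le_mod_geq mod_less)
      then show ?thesis unfolding R_def using False j1 x by auto
    qed
  qed
  have inj: "inj_on g D"
  proof
    fix a b assume ab: "a \<in> D" "b \<in> D" "g a = g b"
    then have "[a + x = b + x] (mod p)" unfolding g_def cong_def by simp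
    then have "[a = b] (mod p)" by (simp add: cong_add_rcancel_nat)
    moreover have "a < p" "b < p" using ab unfolding D_def by auto
    ultimately show "a = b" unfolding cong_def by simp
  qed
  have cD: "card D = p - 2" unfolding D_def using x by (subst card_Diff_singleton) auto
  have cR: "card R = p - 2" unfolding R_def using x by (subst card_Diff_singleton) auto
  have "card (g ` D) = card R" using card_image[OF inj] cD cR by simp
  then have "g ` D = R"
    by (intro card_subset_eq sub) (auto simp: R_def)
  then have bij: "bij_betw g D R" using inj unfolding bij_betw_def by simp
  have "(\<Prod>j\<in>D. int (g j)) = (\<Prod>r\<in>R. int r)"
    using prod.reindex_bij_betw[OF bij, of int] by simp
  moreover have "[(\<Prod>j\<in>D. int j + int x) = (\<Prod>j\<in>D. int (g j))] (mod int p)"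
    by (rule cong_prod) (simp add: g_def cong_def zmod_int)
  ultimately show ?thesis unfolding D_def R_def by simp
qed



lemma coprime_small:
  assumes "prime p" "0 < j" "j < p"
  shows "coprime (int j) (int p)"
proof -
  have "\<not> p dvd j" using assms by (auto dest: dvd_imp_le)
  then have "coprime p j" using prime_imp_coprime[OF assms(1)] by blast
  then show ?thesis by (simp add: coprime_commute)
qed

lemma V_int:
  assumes p: "prime p" and x: "1 \<le> x" "2 * x < p"
  defines "S \<equiv> {1..p-1} - {x, p - x}"
  shows "int p dvd 4 * (\<Prod>j\<in>S. int j - int x) * (\<Prod>j\<in>S. int j + int x) - (\<Prod>j\<in>S. int j)^2"
proof -
  define A where "A = (\<Prod>j\<in>S. int j - int x)"
  define B where "B = (\<Prod>j\<in>S. int j + int x)"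
  define C where "C = (\<Prod>j\<in>S. int j)"
  define u where "u = int x"
  define P where "P = (\<Prod>r\<in>{1..p-1}. int r)"
  have W: "int p dvd P + 1" using wilson_prod[OF p] unfolding P_def cong_iff_dvd_diff by simp
  have fin: "finite {1..p-1}" by simp
  have px: "p - x \<in> {1..p-1}" "x \<in> {1..p-1}" "x \<noteq> p - x" using x by auto
  have S1: "({1..p-1} - {x}) - {p - x} = S" "({1..p-1} - {p - x}) - {x} = S" unfolding S_def by auto
  have upx: "int (p - x) = int p - u" unfolding u_def using x by simp
  have c1: "[(\<Prod>j\<in>{1..p-1}-{p-(p-x)}. int j + int (p - x)) = (\<Prod>r\<in>{1..p-1}-{p-x}. int r)] (mod int p)"
    by (rule shift_prod[OF p]) (use x in auto)
  have e: "p - (p - x) = x" using x by simp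
  have c1': "[(\<Prod>j\<in>{1..p-1}-{x}. int j + int (p - x)) = (\<Prod>r\<in>{1..p-1}-{p-x}. int r)] (mod int p)"
    using c1 unfolding e .
  have c2: "[(\<Prod>j\<in>{1..p-1}-{x}. int j - int x) = (\<Prod>j\<in>{1..p-1}-{x}. int j + int (p - x))] (mod int p)"
    by (rule cong_prod) (use x in \<open>auto simp: cong_iff_dvd_diff\<close>)
  have c3: "[(\<Prod>j\<in>{1..p-1}-{x}. int j - int x) = (\<Prod>r\<in>{1..p-1}-{p-x}. int r)] (mod int p)"
    by (rule cong_trans[OF c2 c1'])
  have e2: "(\<Prod>j\<in>{1..p-1}-{x}. int j - int x) = (int (p-x) - int x) * A"
    unfolding A_def S1(1)[symmetric] by (rule prod.remove) (use px in auto)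
  have e3: "P = (\<Prod>r\<in>{1..p-1}-{p-x}. int r) * int (p - x)"
    unfolding P_def by (subst prod.remove[of _ "p - x"]) (use px in auto)
  have "[(int (p-x) - int x) * A * int (p - x) = P] (mod int p)"
    unfolding e3 using cong_scalar_right[OF c3[unfolded e2], of "int (p - x)"] .
  then have c4: "int p dvd (int (p-x) - int x) * A * int (p - x) - P"
    by (simp add: cong_iff_dvd_diff)
  have "int p dvd ((int (p-x) - int x) * A * int (p - x) - P) + (P + 1)"
    by (rule dvd_add[OF c4 W])
  then have hA: "int p dvd (int p - 2*u) * (int p - u) * A + 1"
    unfolding upx u_def by (simp add: algebra_simps)
  have hA': "int p dvd 2 * u^2 * A + 1"
  proof -
    have eq: "2 * u^2 * A + 1 = ((int p - 2*u) * (int p - u) * A + 1) - int p * ((int p - 3 * u) * A)"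
      by (simp add: algebra_simps power2_eq_square)
    show ?thesis by (subst eq) (rule dvd_diff[OF hA dvd_triv_left])
  qed
  have "[(\<Prod>j\<in>{1..p-1}-{p-x}. int j + int x) = (\<Prod>r\<in>{1..p-1}-{x}. int r)] (mod int p)"
    by (rule shift_prod[OF p]) (use x in auto)
  moreover have "(\<Prod>j\<in>{1..p-1}-{p-x}. int j + int x) = (int x + int x) * B"
    unfolding B_def S1(2)[symmetric] by (rule prod.remove) (use px in auto)
  moreover have "P = (\<Prod>r\<in>{1..p-1}-{x}. int r) * int x"
    unfolding P_def by (subst prod.remove[of _ x]) (use px in auto)
  ultimately have "[(int x + int x) * B * int x = P] (mod int p)"
    using cong_scalar_right by metis
  then have hB': "int p dvd 2 * u^2 * B + 1"
  proof -
    assume "[(int x + int x) * B * int x = P] (mod int p)"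
    then have "int p dvd (int x + int x) * B * int x - P" by (simp add: cong_iff_dvd_diff)
    then have dd: "int p dvd ((int x + int x) * B * int x - P) + (P + 1)" using W by (rule dvd_add)
    have eq: "((int x + int x) * B * int x - P) + (P + 1) = 2 * u^2 * B + 1"
      unfolding u_def by (simp add: algebra_simps power2_eq_square)
    show ?thesis using dd unfolding eq .
  qed
  have "P = int x * (\<Prod>r\<in>{1..p-1}-{x}. int r)"
    unfolding P_def by (rule prod.remove) (use px in auto)
  also have "(\<Prod>r\<in>{1..p-1}-{x}. int r) = int (p - x) * C"
    unfolding C_def S1(1)[symmetric] by (rule prod.remove) (use px in auto)
  finally have "P = u * (int p - u) * C" unfolding upx u_def by simp
  then have hC: "int p dvd u^2 * C - 1"
  proof -
    assume "P = u * (int p - u) * C"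
    then have eq: "u^2 * C - 1 = int p * (u * C) - (P + 1)" by (simp add: algebra_simps power2_eq_square)
    show ?thesis by (subst eq) (rule dvd_diff[OF dvd_triv_left W])
  qed
  define al where "al = 2 * u^2 * A + 1"
  define be where "be = 2 * u^2 * B + 1"
  define ga where "ga = u^2 * C - 1"
  have "u^4 * (4 * A * B - C^2) = al * be - al - be - ga^2 - 2 * ga"
    unfolding al_def be_def ga_def by (simp add: algebra_simps power2_eq_square power4_eq_xxxx)
  moreover have "int p dvd al * be - al - be - ga^2 - 2 * ga"
    using hA' hB' hC unfolding al_def[symmetric] be_def[symmetric] ga_def[symmetric]
    by (intro dvd_diff) (auto simp: power2_eq_square)
  ultimately have d: "int p dvd u^4 * (4 * A * B - C^2)" by simp
  have pp: "prime (int p)" using p by simp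
  have "\<not> int p dvd u"
    unfolding u_def using x by (auto simp: int_dvd_int_iff dest: dvd_imp_le)
  then have "\<not> int p dvd u^4" using pp prime_dvd_power by blast
  then have "int p dvd 4 * A * B - C^2" using d pp prime_dvd_mult_iff by blast
  then show ?thesis unfolding A_def B_def C_def .
qed


lemma V_rat:
  assumes p: "prime p" and x: "1 \<le> x" "2 * x < p"
  shows "pdv p 1 (4 * (\<Prod>j\<in>{1..p-1} - {x, p - x}. (1 - (of_nat x)^2 / (of_nat j)^2 :: rat)) - 1)"
proof -
  define S where "S = {1..p-1} - {x, p - x}"
  define A where "A = (\<Prod>j\<in>S. int j - int x)"
  define B where "B = (\<Prod>j\<in>S. int j + int x)"
  define C where "C = (\<Prod>j\<in>S. int j)"
  have dv: "int p dvd 4 * A * B - C^2" using V_int[OF p x] unfolding A_def B_def C_def S_def .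
  then obtain k where k: "4 * A * B - C^2 = int p * k" by (auto simp: dvd_def)
  have j0: "\<And>j. j \<in> S \<Longrightarrow> j \<noteq> 0" unfolding S_def by auto
  have "(\<Prod>j\<in>S. (1 - (of_nat x)^2 / (of_nat j)^2 :: rat)) = (\<Prod>j\<in>S. of_int ((int j - int x) * (int j + int x)) / of_int (int j * int j))"
    by (rule prod.cong) (auto dest: j0 simp: field_simps power2_eq_square)
  also have "\<dots> = of_int (A * B) / of_int (C^2)"
    unfolding prod_dividef A_def B_def C_def of_int_prod[symmetric] prod.distrib power2_eq_square by simp
  finally have V: "(\<Prod>j\<in>S. (1 - (of_nat x)^2 / (of_nat j)^2 :: rat)) = of_int (A * B) / of_int (C^2)" .
  have finS: "finite S" unfolding S_def by simp
  have "0 \<notin> S" unfolding S_def by auto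
  then have Cne: "C \<noteq> 0" unfolding C_def using finS by (simp add: prod_zero_iff)
  have "4 * (of_int (A * B) / of_int (C^2)) - 1 = (of_int (4 * A * B - C^2) / of_int (C^2) :: rat)"
    using Cne by (simp add: field_simps)
  also have "\<dots> = of_nat p * (of_int k / of_int (C^2))" unfolding k by simp
  finally have eq: "4 * (of_int (A * B) / of_int (C^2)) - 1 = (of_nat p * (of_int k / of_int (C^2)) :: rat)" .
  have "coprime C (int p)"
    unfolding C_def by (rule prod_coprime_left, rule coprime_small[OF p]) (auto simp: S_def)
  then have cop: "coprime (C^2) (int p)" by simp
  have "pint p (of_int k / of_int (C^2))" by (rule pint_div_int[OF pint_int cop])
  then show ?thesis unfolding S_def[symmetric] V eq pdv_def using prime_gt_0_nat[OF p] by simp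
qed

lemma H3:
  assumes p: "prime p" "p > 2"
  shows "pdv p 1 (\<Sum>k=1..p-1. 1 / (of_nat k)^3 :: rat)"
proof -
  define f where "f k = (1 / (of_nat k)^3 :: rat)" for k
  have e: "p - 1 + 1 = p" using p by simp
  have rev: "(\<Sum>k=1..p-1. f k) = (\<Sum>k=1..p-1. f (p - k))"
    using sum.atLeastAtMost_rev[of f 1 "p - 1"] unfolding e .
  have each: "pdv p 1 (f k + f (p - k))" if k: "k \<in> {1..p-1}" for k
  proof -
    have k1: "1 \<le> k" "k < p" using k by auto
    define q where "q = p - k"
    have pq: "(of_nat p :: rat) = of_nat k + of_nat q" unfolding q_def using k1 by simp
    have ne: "(of_nat k :: rat) \<noteq> 0" "(of_nat q :: rat) \<noteq> 0" using k1 unfolding q_def by auto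
    have "f k + f (p - k) = of_nat p * (((of_nat k)^2 - of_nat k * of_nat q + (of_nat q)^2) / (of_nat (k ^ 3 * q ^ 3)))"
      unfolding f_def q_def[symmetric] pq using ne by (simp add: field_simps power3_eq_cube power2_eq_square)
    moreover have "pint p (((of_nat k)^2 - of_nat k * of_nat q + (of_nat q)^2) / (of_nat (k ^ 3 * q ^ 3)))"
    proof -
      have "\<not> p dvd k ^ 3 * q ^ 3" using k1 p(1) unfolding q_def
        by (auto simp: prime_dvd_mult_iff prime_dvd_power_iff dest: dvd_imp_le)
      then show ?thesis by (intro pint_div_nat[OF p(1)]) (auto intro!: pint_diff pint_add pint_mult pint_power)
    qed
    ultimately show ?thesis unfolding pdv_def using p by simp
  qed
  have "2 * (\<Sum>k=1..p-1. f k) = (\<Sum>k=1..p-1. f k + f (p - k))"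
    by (subst mult_2, subst (2) rev) (simp add: sum.distrib)
  moreover have "pdv p 1 (\<Sum>k=1..p-1. f k + f (p - k))" by (rule pdv_sum) (rule each)
  ultimately have "pdv p 1 (2 * (\<Sum>k=1..p-1. f k))" by simp
  then have "pdv p 1 ((2 * (\<Sum>k=1..p-1. f k)) / of_nat 2)"
    by (rule pdv_div_nat[OF p(1)]) (use p in \<open>auto dest: dvd_imp_le simp: prime_nat_iff\<close>)
  then show ?thesis unfolding f_def by simp
qed




lemma pcompose_quad: "pcompose [:1, 0, c:] [:a, 1:] = [:1 + c * a^2, 2 * c * a, (c::rat):]"
  by (rule poly_ext) (simp add: poly_pcompose algebra_simps power2_eq_square)

lemma pcompose_X: "pcompose [:0, 1:] [:a, 1:] = [:a::rat, 1:]"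
  by (rule poly_ext) (simp add: poly_pcompose)

lemma frac_aux: "q \<noteq> 0 \<Longrightarrow> 1 - X^2 / q^2 = (q + X) * ((q - X) / q^2)" for q X :: rat
  by (simp add: field_simps power2_eq_square)

lemma pdv1_frac:
  assumes p: "prime p" and "x \<ge> 1" "x < p"
  shows "pdv p 1 (1 - (of_nat x)^2 / (of_nat (p - x))^2 :: rat)"
proof -
  have ne: "(of_nat (p - x) :: rat) \<noteq> 0" using assms by simp
  have eq: "(of_nat (p - x) :: rat) + of_nat x = of_nat p" using assms by (simp add: of_nat_diff)
  have "(1 - (of_nat x)^2 / (of_nat (p - x))^2 :: rat) = of_nat p * ((of_nat (p - x) - of_nat x) / of_nat ((p - x)^2))"
    using frac_aux[OF ne, of "of_nat x"] unfolding eq by simp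
  moreover have "pint p ((of_nat (p - x) - of_nat x) / of_nat ((p - x)^2))"
    using assms by (intro pint_div_nat[OF p]) (auto intro!: pint_diff simp: prime_dvd_power_iff dest: dvd_imp_le)
  ultimately show ?thesis by (simp add: pdv_def)
qed

lemma F7:
  assumes p: "prime p" "p > 2" and x: "1 \<le> x0" "2 * x0 < p"
  shows "pdv p 1 (coeff (pcompose (phiP (p - 1)) [:of_nat x0, 1:]) 2)"
proof -
  define a where "a = (of_nat x0 :: rat)"
  define E where "E j = pcompose [:1, 0, -1/(of_nat j)^2:] [:a, 1:]" for j
  define S where "S = {1..p-1} - {x0, p - x0}"
  define R where "R = (\<Prod>j\<in>S. E j)"
  define P where "P = pcompose (PiP (p-1)) [:a, 1:]"
  define Phi where "Phi = pcompose (phiP (p-1)) [:a, 1:]"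
  define y where "y = p - x0"
  have pos: "0 < p" using p by simp
  have a0: "a \<noteq> 0" unfolding a_def using x by simp
  have y: "1 \<le> y" "y < p" "y \<noteq> x0" unfolding y_def using x by auto
  have yne: "(of_nat y :: rat) \<noteq> 0" using y by simp
  have Ec: "coeff (E j) 0 = 1 - a^2 / (of_nat j)^2" "coeff (E j) 1 = - 2 * a / (of_nat j)^2"
    "coeff (E j) 2 = - 1 / (of_nat j)^2" for j
    unfolding E_def pcompose_quad by (simp_all add: numeral_2_eq_2)
  have PE: "P = (\<Prod>j\<in>{1..p-1}. E j)" unfolding P_def PiP_def E_def by (simp add: pcompose_prod)
  have split: "{1..p-1} = insert x0 (insert y S)" unfolding S_def y_def using x by auto
  have finS: "finite S" unfolding S_def by simp
  have nS: "x0 \<notin> insert y S" "y \<notin> S" unfolding S_def y_def using x by auto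
  have PeR: "P = E x0 * (E y * R)" unfolding PE split R_def using finS nS by simp
  have ppR: "ppint p R" unfolding R_def
  proof (rule ppint_prod)
    fix j assume "j \<in> S"
    then have j: "1 \<le> j" "j < p" unfolding S_def by auto
    have pj2: "\<not> p dvd j^2" using j p(1) by (auto simp: prime_dvd_power_iff dest: dvd_imp_le)
    have f1: "pint p ((of_nat x0)^2 / (of_nat j)^2)" using pint_div_nat[OF p(1) _ pj2, of "(of_nat x0)^2"] by (simp add: pint_power)
    have f2: "pint p (2 * of_nat x0 / (of_nat j)^2)" using pint_div_nat[OF p(1) _ pj2, of "2 * of_nat x0"] by (simp add: pint_mult)
    have f3: "pint p (1 / (of_nat j)^2)" using pint_div_nat[OF p(1) _ pj2, of 1] by simp
    show "ppint p (E j)" unfolding E_def pcompose_quad a_def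
      using f1 f2 f3 by auto
  qed
  have R0: "coeff R 0 = (\<Prod>j\<in>S. (1 - (of_nat x0)^2 / (of_nat j)^2))"
    unfolding R_def poly_0_coeff_0[symmetric] poly_prod using Ec(1) by (simp add: poly_0_coeff_0 a_def)
  define e1 where "e1 = coeff (E x0) 1"
  define e2 where "e2 = coeff (E x0) 2"
  define b0 where "b0 = coeff (E y) 0"
  define b1 where "b1 = coeff (E y) 1"
  have e0: "coeff (E x0) 0 = 0" using Ec(1)[of x0] a0 unfolding a_def by simp
  have P0: "coeff P 0 = 0" unfolding PeR coeff_mult_012 e0 by simp
  have P1: "coeff P 1 = e1 * b0 * coeff R 0"
    unfolding PeR coeff_mult_012 e0 e1_def b0_def by simp
  have P2: "coeff P 2 = e1 * (b0 * coeff R 1 + b1 * coeff R 0) + e2 * (b0 * coeff R 0)"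
    unfolding PeR coeff_mult_012 e0 e1_def e2_def b0_def b1_def by simp
  have rel: "[:a, 1:] * Phi = smult 2 (P - 1)"
  proof -
    have "pcompose ([:0,1:] * phiP (p-1)) [:a, 1:] = pcompose (smult 2 (PiP (p-1) - 1)) [:a, 1:]"
      by (simp only: phi_Pi_poly)
    then show ?thesis unfolding Phi_def P_def pcompose_mult pcompose_X pcompose_smult pcompose_diff pcompose_1 .
  qed
  have r0: "a * coeff Phi 0 = 2 * (coeff P 0 - 1)"
    using arg_cong[OF rel, of "\<lambda>q. coeff q 0"] by (simp add: coeff_mult_012)
  have r1: "coeff Phi 0 + a * coeff Phi 1 = 2 * coeff P 1"
    using arg_cong[OF rel, of "\<lambda>q. coeff q 1"] by (simp add: coeff_mult_012)
  have r2: "coeff Phi 1 + a * coeff Phi 2 = 2 * coeff P 2"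
    using arg_cong[OF rel, of "\<lambda>q. coeff q 2"] by (simp add: coeff_mult_012 numeral_2_eq_2)
  have k2: "a * coeff Phi 2 = 2 * coeff P 2 - coeff Phi 1" using r2 by (simp add: algebra_simps)
  have k1: "a * coeff Phi 1 = 2 * coeff P 1 - coeff Phi 0" using r1 by (simp add: algebra_simps)
  have key: "a^3 * coeff Phi 2 = 2 * (a^2 * coeff P 2 - 1) - 2 * a * coeff P 1 + 2 * coeff P 0"
  proof -
    have "a^3 * coeff Phi 2 = a * a * (a * coeff Phi 2)" by (simp add: power3_eq_cube mult_ac)
    also have "\<dots> = a * a * (2 * coeff P 2 - coeff Phi 1)" unfolding k2 ..
    also have "\<dots> = 2 * a^2 * coeff P 2 - a * (a * coeff Phi 1)" by (simp add: algebra_simps power2_eq_square)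
    also have "\<dots> = 2 * a^2 * coeff P 2 - a * (2 * coeff P 1 - coeff Phi 0)" unfolding k1 ..
    also have "\<dots> = 2 * a^2 * coeff P 2 - 2 * a * coeff P 1 + a * coeff Phi 0" by (simp add: algebra_simps)
    also have "\<dots> = 2 * (a^2 * coeff P 2 - 1) - 2 * a * coeff P 1 + 2 * coeff P 0" unfolding r0 by (simp add: algebra_simps)
    finally show ?thesis .
  qed
  have pinva: "pint p (1 / a)" unfolding a_def using x p(1) by (intro pint_inv_nat) (auto dest: dvd_imp_le)
  have pinvy: "pint p (1 / of_nat y)" using y p(1) by (intro pint_inv_nat) (auto dest: dvd_imp_le)
  have pa: "pint p a" unfolding a_def by simp
  have e1v: "e1 = - 2 * (1 / a)" unfolding e1_def Ec a_def[symmetric] using a0 by (simp add: power2_eq_square)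
  have e2v: "e2 = - ((1 / a) * (1 / a))" unfolding e2_def Ec a_def[symmetric] using a0 by (simp add: power2_eq_square)
  have b1v: "b1 = - 2 * a * ((1 / of_nat y) * (1 / of_nat y))" unfolding b1_def Ec by (simp add: power2_eq_square)
  have "pint p (2 * (1/a))" using pinva by (intro pint_mult) simp_all
  then have pe1: "pint p e1" unfolding e1v by simp
  have "pint p ((1/a)*(1/a))" by (intro pint_mult pinva)
  then have pe2: "pint p e2" unfolding e2v by (simp only: pint_uminus)
  have "pint p (2 * a * ((1 / of_nat y) * (1 / of_nat y)))" by (intro pint_mult pinvy pa) simp
  then have pb1: "pint p b1" unfolding b1v by (simp only: pint_uminus mult_minus_left)
  have db0: "pdv p 1 b0" unfolding b0_def Ec a_def using pdv1_frac[OF p(1), of x0] x unfolding y_def by simp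
  have pR0: "pint p (coeff R 0)" "pint p (coeff R 1)" using ppR by (auto intro: ppintD)
  have dP0: "pdv p 1 (coeff P 0)" unfolding P0 by simp
  have dP1: "pdv p 1 (coeff P 1)" unfolding P1 using db0 pe1 pR0 by (intro pdv_mult_pint pdv_mult_pint')
  have V: "pdv p 1 (4 * coeff R 0 - 1)" unfolding R0 S_def using V_rat[OF p(1) x] .
  have t4: "pdv p 1 (4 * a^2 / (of_nat y)^2 - 4)"
  proof -
    have "4 * a^2 / (of_nat y)^2 - 4 = - 4 * (1 - a^2 / (of_nat y)^2)" using yne by (simp add: field_simps)
    moreover have "pdv p 1 (1 - a^2 / (of_nat y)^2)" using pdv1_frac[OF p(1), of x0] x unfolding y_def a_def by simp
    ultimately show ?thesis using pdv_mult_pint'[of p "-4" 1 "1 - a^2 / (of_nat y)^2"] by simp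
  qed
  have dP2: "pdv p 1 (a^2 * coeff P 2 - 1)"
  proof -
    have "a^2 * coeff P 2 - 1 = (a^2 * e1 * coeff R 1 + a^2 * e2 * coeff R 0) * b0
        + ((4 * a^2 / (of_nat y)^2 - 4) * coeff R 0 + (4 * coeff R 0 - 1))"
      unfolding P2 e1v b1v using a0 yne by (simp add: field_simps power2_eq_square)
    also have "pdv p 1 \<dots>"
    proof (rule pdv_add)
      have "pint p (a^2 * e1 * coeff R 1 + a^2 * e2 * coeff R 0)" using pe1 pe2 pR0 pa by auto
      then show "pdv p 1 ((a^2 * e1 * coeff R 1 + a^2 * e2 * coeff R 0) * b0)" by (rule pdv_mult_pint'[OF _ db0])
      show "pdv p 1 ((4 * a^2 / (of_nat y)^2 - 4) * coeff R 0 + (4 * coeff R 0 - 1))"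
        using t4 V pR0 by (intro pdv_add pdv_mult_pint) auto
    qed
    finally show ?thesis .
  qed
  have "pdv p 1 (2 * (a^2 * coeff P 2 - 1) - 2 * a * coeff P 1 + 2 * coeff P 0)"
  proof (intro pdv_add pdv_diff)
    show "pdv p 1 (2 * (a^2 * coeff P 2 - 1))" by (rule pdv_mult_pint'[OF _ dP2]) simp
    show "pdv p 1 (2 * a * coeff P 1)" by (rule pdv_mult_pint'[OF _ dP1]) (simp add: pa pint_mult)
    show "pdv p 1 (2 * coeff P 0)" by (rule pdv_mult_pint'[OF _ dP0]) simp
  qed
  then have "pdv p 1 (a^3 * coeff Phi 2)" unfolding key .
  then have "pdv p 1 (a^3 * coeff Phi 2 * ((1/a) * (1/a) * (1/a)))"
    by (rule pdv_mult_pint) (intro pint_mult pinva)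
  moreover have "a^3 * coeff Phi 2 * ((1/a) * (1/a) * (1/a)) = coeff Phi 2" using a0 by (simp add: field_simps power3_eq_cube)
  ultimately show ?thesis unfolding Phi_def a_def by simp
qed



lemma pint_half: assumes "prime p" "odd p" shows "pint p (1/2)"
proof -
  have "\<not> p dvd 2"
  proof
    assume "p dvd 2"
    then have "p \<le> 2" by (rule dvd_imp_le) simp
    moreover have "p \<ge> 2" using prime_ge_2_nat[OF assms(1)] .
    ultimately have "p = 2" by simp
    then show False using assms(2) by simp
  qed
  from pint_inv_nat[OF assms(1) this] show ?thesis by simp
qed

lemma ppint_Dp: "ppint p (Dp k)"
  unfolding Dp_def by (intro ppint_prod ppint_mult) (auto intro!: pint_add)

lemma pint_cc: "prime p \<Longrightarrow> 0 < k \<Longrightarrow> k < p \<Longrightarrow> pint p (cc k)"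
proof -
  assume p: "prime p" and k: "k < p" and k0: "0 < k"
  have "\<not> p dvd k * (fact k)^2" using p k k0
    by (auto simp: prime_dvd_mult_iff prime_dvd_power_iff prime_dvd_fact_iff dest: dvd_imp_le)
  then have "pint p ((-1)^k / of_nat (k * (fact k)^2))" by (intro pint_div_nat[OF p]) auto
  then show ?thesis unfolding cc_def by simp
qed

lemma ppint_fP: "prime p \<Longrightarrow> ppint p (fP (p - 1))"
  unfolding fP_def by (intro ppint_sum ppint_smult pint_cc ppint_Dp) auto

lemma Dp_vanish: "n < k \<Longrightarrow> poly (Dp k) (of_nat n) = 0"
  unfolding poly_Dp by (intro prod_zero) (auto intro!: bexI[of _ n])

lemma Dp_cong:
  assumes p: "prime p" "odd p"
  shows "pdv p 2 (poly (Dp k) (-1/2) - poly (Dp k) (of_nat ((p - 1) div 2)))"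
proof -
  define n where "n = (p - 1) div 2"
  obtain n' where n': "p = 2 * n' + 1" using p(2) by (rule oddE)
  have "n = n'" unfolding n_def n' by simp
  then have pn: "(of_nat p :: rat) = 2 * of_nat n + 1" unfolding n' by simp
  have h2: "pint p (1/2)" using pint_half[OF p] .
  have "pdv p 2 ((\<Prod>j<k. (-1/2 - of_nat j) * (-1/2 + of_nat j + 1)) - (\<Prod>j<k. (of_nat n - of_nat j) * (of_nat n + of_nat j + 1)))"
  proof (rule pdv_prod_diff)
    fix j assume "j \<in> {..<k}"
    show "pint p ((-1/2 - of_nat j) * (-1/2 + of_nat j + 1))" using h2
      by (intro pint_mult pint_add pint_diff) (auto simp: minus_divide_left[symmetric])
    show "pint p ((of_nat n - of_nat j) * (of_nat n + of_nat j + 1))" by (intro pint_mult pint_add pint_diff) simp_all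
    have "(-1/2 - of_nat j) * (-1/2 + of_nat j + 1) - (of_nat n - of_nat j) * (of_nat n + of_nat j + 1)
        = - ((2 * of_nat n + 1)^2 / (4::rat))"
      by (simp add: field_simps power2_eq_square)
    also have "\<dots> = (of_nat p)^2 * (-(1/2) * (1/2))" unfolding pn[symmetric] by (simp add: power2_eq_square)
    finally have eq: "(-1/2 - of_nat j) * (-1/2 + of_nat j + 1) - (of_nat n - of_nat j) * (of_nat n + of_nat j + 1)
        = (of_nat p)^2 * (-(1/2) * (1/2 :: rat))" .
    have "pint p (-(1/2) * (1/2 :: rat))" using h2 by (intro pint_mult) simp_all
    then show "pdv p 2 ((-1/2 - of_nat j) * (-1/2 + of_nat j + 1) - (of_nat n - of_nat j) * (of_nat n + of_nat j + 1))"
      unfolding eq by (rule pdv_ppow)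
  qed
  then show ?thesis unfolding poly_Dp n_def by simp
qed

lemma term2: "k \<ge> 1 \<Longrightarrow> (pochhammer (1/2 :: rat) k)^2 / (pochhammer 1 k)^2 * (1 / (of_nat k)^2) = cc k / of_nat k * poly (Dp k) (-1/2)"
proof -
  assume k: "k \<ge> 1"
  have "(pochhammer (1/2 :: rat) k)^2 / (pochhammer 1 k)^2 * (1 / (of_nat k)^2)
      = ((pochhammer (1/2 :: rat) k)^2 / (pochhammer 1 k)^2 * (1 / of_nat k)) * (1 / of_nat k)"
    by (simp add: power2_eq_square)
  also have "\<dots> = cc k / of_nat k * poly (Dp k) (-1/2)" unfolding term1[OF k] by simp
  finally show ?thesis .
qed

lemma setup_p:
  fixes p :: nat
  assumes "prime p" "p > 3"
  shows "odd p" "(p - 1) div 2 \<ge> 1" "(p - 1) div 2 \<le> p - 1" "p = 2 * ((p - 1) div 2) + 1"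
proof -
  show o: "odd p" using assms prime_odd_nat by auto
  show "(p - 1) div 2 \<ge> 1" using assms by auto
  show "(p - 1) div 2 \<le> p - 1" by simp
  obtain n' where n': "p = 2 * n' + 1" using o by (rule oddE)
  then show "p = 2 * ((p - 1) div 2) + 1" by simp
qed

lemma part2:
  assumes p: "prime p" "p > 3"
  shows "rat_cong (\<Sum>k=1..p-1. (pochhammer (1/2 :: rat) k)^2 / (pochhammer 1 k)^2 * (1 / (of_nat k)^2))
                  (- 2 * (harm ((p - 1) div 2))^2) (p^2)"
proof -
  define n where "n = (p - 1) div 2"
  note sp = setup_p[OF p, folded n_def]
  have S: "(\<Sum>k=1..p-1. (pochhammer (1/2 :: rat) k)^2 / (pochhammer 1 k)^2 * (1 / (of_nat k)^2))
      = (\<Sum>k=1..p-1. cc k / of_nat k * poly (Dp k) (-1/2))"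
  proof (rule sum.cong)
    fix k assume "k \<in> {1..p-1}"
    then show "(pochhammer (1/2 :: rat) k)^2 / (pochhammer 1 k)^2 * (1 / (of_nat k)^2) = cc k / of_nat k * poly (Dp k) (-1/2)"
      by (intro term2) simp
  qed simp
  have T: "(\<Sum>k=1..p-1. cc k / of_nat k * poly (Dp k) (of_nat n)) = (\<Sum>k=1..n. cc k / of_nat k * poly (Dp k) (of_nat n))"
    by (rule sum.mono_neutral_right) (use sp in \<open>auto simp: Dp_vanish\<close>)
  also have "\<dots> = -2 * (harm n)^2" by (rule PF_sums(2)[OF sp(2)])
  finally have T': "(\<Sum>k=1..p-1. cc k / of_nat k * poly (Dp k) (of_nat n)) = -2 * (harm n)^2" .
  have "pdv p 2 ((\<Sum>k=1..p-1. cc k / of_nat k * poly (Dp k) (-1/2)) - (\<Sum>k=1..p-1. cc k / of_nat k * poly (Dp k) (of_nat n)))"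
    unfolding sum_subtractf[symmetric]
  proof (rule pdv_sum)
    fix k assume k: "k \<in> {1..p-1}"
    have "pint p (cc k / of_nat k)"
      using k p by (intro pint_div_nat pint_cc) (auto dest: dvd_imp_le)
    moreover have "pdv p 2 (poly (Dp k) (-1/2) - poly (Dp k) (of_nat n))"
      unfolding n_def using Dp_cong[OF p(1) sp(1)] .
    ultimately have "pdv p 2 (cc k / of_nat k * (poly (Dp k) (-1/2) - poly (Dp k) (of_nat n)))"
      by (rule pdv_mult_pint')
    then show "pdv p 2 (cc k / of_nat k * poly (Dp k) (-1/2) - cc k / of_nat k * poly (Dp k) (of_nat n))"
      by (simp add: algebra_simps)
  qed
  then have "pdv p 2 ((\<Sum>k=1..p-1. (pochhammer (1/2 :: rat) k)^2 / (pochhammer 1 k)^2 * (1 / (of_nat k)^2)) - (- 2 * (harm n)^2))"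
    unfolding S T' by simp
  then show ?thesis unfolding n_def by (rule rat_cong_pdv[OF p(1)])
qed

lemma poly_fP: "poly (fP m) x = (\<Sum>k=1..m. cc k * poly (Dp k) x)"
  unfolding fP_def by (simp add: poly_sum)

lemma c2_tele:
  "coeff (pcompose (fP m) [:of_nat t, 1:]) 2 = coeff (fP m) 2 + (\<Sum>x=1..t. coeff (pcompose (phiP m) [:of_nat x, 1:]) 2)"
proof (induction t)
  case 0 then show ?case by simp
next
  case (Suc t)
  have "coeff (pcompose (fP m) [:of_nat (Suc t), 1:]) 2 - coeff (pcompose (fP m) [:of_nat (Suc t) - 1, 1:]) 2
      = coeff (pcompose (phiP m) [:of_nat (Suc t), 1:]) 2"
    using arg_cong[OF fP_shift_diff[of m "of_nat (Suc t)"], of "\<lambda>q. coeff q 2"] by simp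
  moreover have "(of_nat (Suc t) - 1 :: rat) = of_nat t" by simp
  ultimately show ?case using Suc by simp
qed

lemma c2_pdv:
  assumes p: "prime p" "p > 3"
  shows "pdv p 1 (coeff (pcompose (fP (p - 1)) [:-1/2, 1:]) 2)"
proof -
  define n where "n = (p - 1) div 2"
  note sp = setup_p[OF p, folded n_def]
  define f where "f = fP (p - 1)"
  have pf: "ppint p f" unfolding f_def by (rule ppint_fP[OF p(1)])
  have h2: "pint p (1/2)" by (rule pint_half[OF p(1) sp(1)])
  have "pdv p 1 (coeff f 2)"
    unfolding f_def coeff_fP_2 pdv_uminus using H3[OF p(1)] p by simp
  moreover have "pdv p 1 (\<Sum>x=1..n. coeff (pcompose (phiP (p - 1)) [:of_nat x, 1:]) 2)"
  proof (rule pdv_sum)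
    fix x assume "x \<in> {1..n}"
    then have "1 \<le> x" "2 * x < p" using sp(4) by auto
    then show "pdv p 1 (coeff (pcompose (phiP (p - 1)) [:of_nat x, 1:]) 2)"
      using F7[OF p(1)] p by simp
  qed
  ultimately have cn: "pdv p 1 (coeff (pcompose f [:of_nat n, 1:]) 2)"
    unfolding f_def c2_tele by (rule pdv_add)
  have pn: "(of_nat p :: rat) = 2 * of_nat n + 1" using sp(4) by (metis of_nat_1 of_nat_add of_nat_mult of_nat_numeral)
  have "ppdv p 1 ([:-1/2, 1:] - [:of_nat n, 1:])"
  proof -
    have "[:-1/2, 1:] - [:of_nat n, 1:] = [:of_nat p * (- (1/2)) :: rat:]"
      unfolding pn by (simp add: algebra_simps)
    moreover have "pdv p 1 (of_nat p ^ 1 * (- (1/2)) :: rat)" by (rule pdv_ppow) (simp add: h2)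
    ultimately show ?thesis by simp
  qed
  then have "ppdv p 1 (pcompose f [:-1/2, 1:] - pcompose f [:of_nat n, 1:])"
    using h2 by (intro ppdv_pcompose pf) (auto simp: minus_divide_left[symmetric])
  then have "pdv p 1 (coeff (pcompose f [:-1/2, 1:] - pcompose f [:of_nat n, 1:]) 2)"
    by (rule ppdvD)
  then have "pdv p 1 (coeff (pcompose f [:-1/2, 1:]) 2 - coeff (pcompose f [:of_nat n, 1:]) 2)"
    by (simp only: coeff_diff)
  then have "pdv p 1 ((coeff (pcompose f [:-1/2, 1:]) 2 - coeff (pcompose f [:of_nat n, 1:]) 2) + coeff (pcompose f [:of_nat n, 1:]) 2)"
    using cn by (rule pdv_add)
  then show ?thesis unfolding f_def by simp
qed

lemma part1:
  assumes p: "prime p" "p > 3"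
  shows "rat_cong (\<Sum>k=1..p-1. (pochhammer (1/2 :: rat) k)^2 / (pochhammer 1 k)^2 * (1 / of_nat k))
                  (- 2 * harm ((p - 1) div 2)) (p^3)"
proof -
  define n where "n = (p - 1) div 2"
  note sp = setup_p[OF p, folded n_def]
  define f where "f = fP (p - 1)"
  define Q where "Q = pcompose f [:-1/2, 1:]"
  define h where "h = (of_nat p / 2 :: rat)"
  define S1 where "S1 = (\<Sum>k=1..p-1. (pochhammer (1/2 :: rat) k)^2 / (pochhammer 1 k)^2 * (1 / of_nat k))"
  have h2: "pint p (1/2)" by (rule pint_half[OF p(1) sp(1)])
  have pn: "(of_nat p :: rat) = 2 * of_nat n + 1" using sp(4) by (metis of_nat_1 of_nat_add of_nat_mult of_nat_numeral)
  have S1f: "S1 = poly f (-1/2)"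
    unfolding S1_def f_def poly_fP
  proof (rule sum.cong)
    fix k assume "k \<in> {1..p-1}"
    then show "(pochhammer (1/2 :: rat) k)^2 / (pochhammer 1 k)^2 * (1 / of_nat k) = cc k * poly (Dp k) (-1/2)"
      by (intro term1) simp
  qed simp
  have fn: "poly f (of_nat n) = -2 * harm n"
  proof -
    have "poly f (of_nat n) = (\<Sum>k=1..n. cc k * poly (Dp k) (of_nat n))"
      unfolding f_def poly_fP by (rule sum.mono_neutral_right) (use sp in \<open>auto simp: Dp_vanish\<close>)
    also have "\<dots> = -2 * harm n" by (rule PF_sums(1)[OF sp(2)])
    finally show ?thesis .
  qed
  have fn': "poly f (-1 - of_nat n) = -2 * harm n" unfolding f_def fP_sym using fn unfolding f_def .
  have Qh: "poly Q h = -2 * harm n"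
    unfolding Q_def poly_pcompose h_def pn using fn by (simp add: field_simps)
  have arg: "poly [:-1/2, 1:] (-h) = -1 - of_nat n" unfolding h_def pn by (simp add: field_simps)
  have Qmh: "poly Q (-h) = -2 * harm n"
    unfolding Q_def poly_pcompose arg using fn' .
  have Q0: "coeff Q 0 = S1" unfolding S1f Q_def poly_0_coeff_0[symmetric] poly_pcompose by simp
  define r1 where "r1 = poly (poly_shift 3 Q) h"
  define r2 where "r2 = poly (poly_shift 3 Q) (-h)"
  have t1: "poly Q h = coeff Q 0 + coeff Q 1 * h + coeff Q 2 * h^2 + h^3 * r1"
    unfolding r1_def by (rule taylor3)
  have t2: "poly Q (-h) = coeff Q 0 - coeff Q 1 * h + coeff Q 2 * h^2 - h^3 * r2"
    unfolding r2_def using taylor3[of Q "-h"] by simp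
  have eq: "S1 - (-2 * harm n) = (of_nat p)^2 * (coeff Q 2 * (- (1/2) * (1/2))) + (of_nat p)^3 * ((r2 - r1) * ((1/2) * (1/2) * (1/2) * (1/2)))"
  proof -
    have "2 * (-2 * harm n) = 2 * S1 + 2 * coeff Q 2 * h^2 + h^3 * (r1 - r2)"
      using t1 t2 Qh Qmh Q0 by (simp add: algebra_simps)
    then have "S1 - (-2 * harm n) = - (coeff Q 2 * h^2) - h^3 * (r1 - r2) / 2"
      by (simp add: field_simps)
    then show ?thesis unfolding h_def by (simp add: field_simps power2_eq_square power3_eq_cube)
  qed
  have ppQ: "ppint p Q" unfolding Q_def f_def
    using h2 by (intro ppint_pcompose ppint_fP[OF p(1)]) (auto simp: minus_divide_left[symmetric])
  have ph: "pint p h" unfolding h_def using h2 pint_mult[OF pint_nat[of p p] h2] by simp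
  have pr: "pint p r1" "pint p r2" unfolding r1_def r2_def using ppQ ph by (auto intro!: pint_poly ppint_shift)
  have c2: "pdv p 1 (coeff Q 2)" unfolding Q_def f_def using c2_pdv[OF p] .
  have d1: "pdv p 3 ((of_nat p)^2 * (coeff Q 2 * (- (1/2) * (1/2))))"
  proof -
    have "pdv p 2 ((of_nat p)^2 * 1)" by (rule pdv_ppow) simp
    moreover have "pdv p 1 (coeff Q 2 * (- (1/2) * (1/2)))" using c2 h2 by (intro pdv_mult_pint pint_mult) simp_all
    ultimately have "pdv p (2 + 1) ((of_nat p)^2 * 1 * (coeff Q 2 * (- (1/2) * (1/2))))" by (rule pdv_mult)
    then show ?thesis by simp
  qed
  have d2: "pdv p 3 ((of_nat p)^3 * ((r2 - r1) * ((1/2) * (1/2) * (1/2) * (1/2))))"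
    by (rule pdv_ppow) (use pr h2 in \<open>intro pint_mult pint_diff, simp_all\<close>)
  have "pdv p 3 (S1 - (-2 * harm n))" unfolding eq using d1 d2 by (rule pdv_add)
  then show ?thesis unfolding S1_def n_def by (rule rat_cong_pdv[OF p(1)])
qed

theorem theorem4p2:
  fixes p :: nat
  assumes "prime p" and "p > 3"
  shows "rat_cong (\<Sum>k=1..p-1. (pochhammer (1/2 :: rat) k)^2 / (pochhammer 1 k)^2 * (1 / of_nat k))
                  (- 2 * harm ((p - 1) div 2)) (p^3) \<and>
         rat_cong (\<Sum>k=1..p-1. (pochhammer (1/2 :: rat) k)^2 / (pochhammer 1 k)^2 * (1 / (of_nat k)^2))
                  (- 2 * (harm ((p - 1) div 2))^2) (p^2)"
  using part1[OF assms] part2[OF assms] by simp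


end
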